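(* Let $P$ be as in the context. For $v\in\mathbb C^n$ let $f^v=(h^v,g^v)$ be the disc defined in the context. Then the set $\bigcup_{v\in\mathbb C^n}f^v(\Delta)$ contains a nonempty open subset of $\mathbb C^{n+1}$.
   Context: $\Delta$ is the open unit disc and $b\Delta$ the unit circle. $M=(m_1,\dots,m_n)$ is a vector of positive integers, and $M\cdot J=\sum m_ij_i$. $P:\mathbb C^n\to\mathbb R$ is a real polynomial with $P(t^{m_1}z_1,\dots,t^{m_n}z_n,t^{m_1}\bar z_1,\dots)=t^dP(z,\bar z)$ for real $t$. Write $P=\sum_{M\cdot J+M\cdot K=d}\alpha_{JK}z^J\bar z^K$, with $P\not\equiv0$ and $\alpha_{JK}=0$ if $J=0$ or $K=0$. $k_0$ is the largest $k$ with $d/2\le k\le d-1$ such that $\alpha_{JK}\ne0$ for some $M\cdot K=k$. The model is $S_P=\{\mathrm{Re}\,w=P(z,\bar z)\}$. For $v\in\mathbb C^n$ let $h^v(\zeta)=((1-\zeta)^{m_1}v_1,\dots,(1-\zeta)^{m_n}v_n)$. Let $g^v$ be the holomorphic polynomial in $\zeta$ with $g^v(1)=0$ and $\mathrm{Re}\,g^v(\zeta)=P(h^v(\zeta),\overline{h^v(\zeta)})$ for $\zeta\in b\Delta$. Set $f^v=(h^v,g^v)$, a holomorphic disc with $f^v(b\Delta)\subset S_P$ and $f^v(1)=0$. *)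

theory Defs
  imports "HOL-Analysis.Analysis" "HOL-Computational_Algebra.Polynomial"
begin

definition wdeg :: "('n::finite \<Rightarrow> nat) \<Rightarrow> ('n \<Rightarrow> nat) \<Rightarrow> nat" where
  "wdeg M J = (\<Sum>i\<in>UNIV. M i * J i)"

definition mono :: "complex^'n::finite \<Rightarrow> ('n \<Rightarrow> nat) \<Rightarrow> complex" where
  "mono z J = (\<Prod>i\<in>UNIV. (z$i) ^ (J i))"

definition modelP :: "('n::finite \<Rightarrow> nat) \<Rightarrow> nat \<Rightarrow> (('n \<Rightarrow> nat) \<Rightarrow> ('n \<Rightarrow> nat) \<Rightarrow> complex)
    \<Rightarrow> complex^'n \<Rightarrow> complex" where
  "modelP M d \<alpha> z = (\<Sum>(J,K)\<in>{(J,K). wdeg M J + wdeg M K = d}.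
       \<alpha> J K * mono z J * mono (\<chi> i. cnj (z$i)) K)"

definition hdisc :: "('n::finite \<Rightarrow> nat) \<Rightarrow> complex^'n \<Rightarrow> complex \<Rightarrow> complex^'n" where
  "hdisc M v \<zeta> = (\<chi> i. (1 - \<zeta>) ^ (M i) * v$i)"

end

theory Submission
  imports Defs "HOL-Complex_Analysis.Complex_Analysis"
begin


definition IS :: "('n::finite \<Rightarrow> nat) \<Rightarrow> nat \<Rightarrow> (('n\<Rightarrow>nat)\<times>('n\<Rightarrow>nat)) set" where
  "IS M d = {(J,K). wdeg M J + wdeg M K = d}"

definition cvec :: "complex^'n::finite \<Rightarrow> complex^'n" where
  "cvec v = (\<chi> i. cnj (v$i))"

definition tt :: "('n::finite \<Rightarrow> nat) \<Rightarrow> (('n \<Rightarrow> nat) \<Rightarrow> ('n \<Rightarrow> nat) \<Rightarrow> complex) \<Rightarrow> complex^'n \<Rightarrow> ('n \<Rightarrow> nat) \<Rightarrow> ('n \<Rightarrow> nat) \<Rightarrow> complex" where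
  "tt M \<alpha> v J K = \<alpha> J K * mono v J * mono (cvec v) K"

definition Hb :: "nat \<Rightarrow> nat \<Rightarrow> complex \<Rightarrow> complex" where
  "Hb d b z = (\<Sum>j\<in>{b..d}. of_nat (d choose j) * (-1)^j * z^(j-b))"

definition Ab :: "nat \<Rightarrow> nat \<Rightarrow> complex \<Rightarrow> complex" where
  "Ab d b z = (\<Sum>j<b. of_nat (d choose j) * (-1)^j * z^(b-j))"

lemma finite_IS:
  fixes M :: "'n::finite \<Rightarrow> nat"
  assumes "\<forall>i. M i > 0"
  shows "finite (IS M d)"
proof -
  have le: "J i \<le> d" if "wdeg M J \<le> d" for J i
  proof -
    have "J i \<le> M i * J i" using assms by (simp add: Suc_le_eq)
    also have "\<dots> \<le> wdeg M J" unfolding wdeg_def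
      by (rule member_le_sum) auto
    finally show ?thesis using that by simp
  qed
  have "IS M d \<subseteq> (PiE UNIV (\<lambda>_. {..d})) \<times> (PiE UNIV (\<lambda>_. {..d}))"
    unfolding IS_def using le by (auto simp: PiE_def Pi_def extensional_def)
  moreover have "finite ((PiE (UNIV::'n set) (\<lambda>_. {..d::nat})) \<times> (PiE (UNIV::'n set) (\<lambda>_. {..d})))"
    by (intro finite_cartesian_product finite_PiE) auto
  ultimately show ?thesis using finite_subset by blast
qed

lemma wdeg_zero:
  assumes "\<forall>i. M i > 0" "wdeg M J = 0"
  shows "J = (\<lambda>_. 0)"
proof
  fix i
  have "M i * J i \<le> wdeg M J" unfolding wdeg_def by (rule member_le_sum) auto
  then show "J i = 0" using assms(2) assms(1)[rule_format, of i] by simp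
qed

lemma mono_hdisc: "mono (hdisc M v z) J = (1-z)^(wdeg M J) * mono v J"
proof -
  have "mono (hdisc M v z) J = (\<Prod>i\<in>UNIV. (1-z)^(M i * J i) * (v$i)^(J i))"
    unfolding mono_def hdisc_def by (simp add: power_mult_distrib power_mult)
  also have "\<dots> = (\<Prod>i\<in>UNIV. (1-z)^(M i * J i)) * (\<Prod>i\<in>UNIV. (v$i)^(J i))"
    by (rule prod.distrib)
  also have "(\<Prod>i\<in>UNIV. (1-z)^(M i * J i)) = (1-z)^(wdeg M J)"
    unfolding wdeg_def by (rule power_sum[symmetric])
  finally show ?thesis unfolding mono_def by simp
qed

lemma mono_cvec_hdisc: "mono (cvec (hdisc M v z)) K = cnj (1-z)^(wdeg M K) * mono (cvec v) K"
proof -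
  have "mono (cvec (hdisc M v z)) K = (\<Prod>i\<in>UNIV. cnj (1-z)^(M i * K i) * (cnj (v$i))^(K i))"
    unfolding mono_def hdisc_def cvec_def by (simp add: power_mult_distrib power_mult)
  also have "\<dots> = (\<Prod>i\<in>UNIV. cnj (1-z)^(M i * K i)) * (\<Prod>i\<in>UNIV. (cnj (v$i))^(K i))"
    by (rule prod.distrib)
  also have "(\<Prod>i\<in>UNIV. cnj (1-z)^(M i * K i)) = cnj (1-z)^(wdeg M K)"
    unfolding wdeg_def by (rule power_sum[symmetric])
  finally show ?thesis unfolding mono_def cvec_def by simp
qed

lemma modelP_hdisc:
  "modelP M d \<alpha> (hdisc M v z) = (\<Sum>(J,K)\<in>IS M d. tt M \<alpha> v J K * ((1-z)^(wdeg M J) * cnj (1-z)^(wdeg M K)))"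
proof -
  have "modelP M d \<alpha> (hdisc M v z) = (\<Sum>(J,K)\<in>IS M d. \<alpha> J K * mono (hdisc M v z) J * mono (cvec (hdisc M v z)) K)"
    by (simp add: modelP_def IS_def cvec_def)
  also have "\<dots> = (\<Sum>(J,K)\<in>IS M d. tt M \<alpha> v J K * ((1-z)^(wdeg M J) * cnj (1-z)^(wdeg M K)))"
    unfolding tt_def mono_hdisc mono_cvec_hdisc by (intro sum.cong refl) (auto simp: mult_ac)
  finally show ?thesis .
qed

lemma circle_expand:
  assumes z: "norm z = 1" and b: "b \<le> d"
  shows "(1-z)^d * cnj z ^ b = Hb d b z + cnj (Ab d b z)"
proof -
  have zz: "z * cnj z = 1" using z by (simp add: complex_norm_square[symmetric])
  have e1: "z^j * cnj z ^ b = z^(j-b)" if "b \<le> j" for j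
  proof -
    have "z^j = z^(j-b) * z^b" using that by (metis le_add_diff_inverse2 power_add)
    then have "z^j * cnj z^b = z^(j-b) * (z * cnj z)^b" by (simp add: power_mult_distrib mult.assoc)
    then show ?thesis using zz by simp
  qed
  have e2: "z^j * cnj z ^ b = cnj z^(b-j)" if "j < b" for j
  proof -
    have bj: "b = (b-j) + j" using that by simp
    have "cnj z^b = cnj z^(b-j) * cnj z^j"
      by (subst bj, subst power_add, simp)
    then have "z^j * cnj z^b = cnj z^(b-j) * (z * cnj z)^j" by (simp add: power_mult_distrib mult_ac)
    then show ?thesis using zz by simp
  qed
  have bin: "(1-z)^d = (\<Sum>j\<le>d. of_nat (d choose j) * (-1)^j * z^j)"
  proof -
    have "(1-z)^d = (-z + 1)^d" by simp
    also have "\<dots> = (\<Sum>j\<le>d. of_nat (d choose j) * (-z)^j * 1^(d-j))" by (rule binomial_ring)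
    also have "\<dots> = (\<Sum>j\<le>d. of_nat (d choose j) * (-1)^j * z^j)"
    proof (intro sum.cong refl)
      fix j
      have "(-z)^j = ((-1) * z)^j" by simp
      also have "\<dots> = (-1)^j * z^j" by (rule power_mult_distrib)
      finally show "of_nat (d choose j) * (-z)^j * 1^(d-j) = of_nat (d choose j) * (-1)^j * z^j"
        by simp
    qed
    finally show ?thesis .
  qed
  have "(1-z)^d * cnj z ^ b = (\<Sum>j\<le>d. of_nat (d choose j) * (-1)^j * (z^j * cnj z ^ b))"
    unfolding bin by (simp only: sum_distrib_right mult.assoc)
  also have "{..d} = {..<b} \<union> {b..d}" using b by auto
  also have "(\<Sum>j\<in>{..<b} \<union> {b..d}. of_nat (d choose j) * (-1)^j * (z^j * cnj z ^ b))
      = (\<Sum>j<b. of_nat (d choose j) * (-1)^j * (z^j * cnj z ^ b)) + (\<Sum>j\<in>{b..d}. of_nat (d choose j) * (-1)^j * (z^j * cnj z ^ b))"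
    by (rule sum.union_disjoint) (simp_all add: ivl_disj_int)
  also have "(\<Sum>j\<in>{b..d}. of_nat (d choose j) * (-1)^j * (z^j * cnj z ^ b)) = Hb d b z"
    unfolding Hb_def by (intro sum.cong refl) (simp add: e1)
  also have "(\<Sum>j<b. of_nat (d choose j) * (-1)^j * (z^j * cnj z ^ b)) = cnj (Ab d b z)"
    unfolding Ab_def cnj_sum by (intro sum.cong refl) (simp add: e2)
  finally show ?thesis by simp
qed



definition G0 where
  "G0 M d \<alpha> v z = (\<Sum>(J,K)\<in>IS M d. (-1)^(wdeg M K) * tt M \<alpha> v J K * Hb d (wdeg M K) z
      + cnj ((-1)^(wdeg M K) * tt M \<alpha> v J K) * Ab d (wdeg M K) z)"

definition gexp where
  "gexp M d \<alpha> v z = G0 M d \<alpha> v z - G0 M d \<alpha> v 1"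

lemma Re_mult_cnj_swap: "Re (x * cnj y) = Re (cnj x * y)"
  by simp

lemma re_boundary:
  assumes z: "norm z = 1"
  shows "Re (modelP M d \<alpha> (hdisc M v z)) = Re (G0 M d \<alpha> v z)"
proof -
  have zz: "z * cnj z = 1" using z by (simp add: complex_norm_square[symmetric])
  have c1: "cnj (1-z) = (-1) * ((1-z) * cnj z)" using zz by (simp add: algebra_simps)
  have tm: "(1-z)^(wdeg M J) * cnj (1-z)^(wdeg M K)
      = (-1)^(wdeg M K) * (Hb d (wdeg M K) z + cnj (Ab d (wdeg M K) z))"
    if "(J,K) \<in> IS M d" for J K
  proof -
    have dd: "d = wdeg M J + wdeg M K" using that by (simp add: IS_def)
    have "(1-z)^(wdeg M J) * cnj (1-z)^(wdeg M K) = (1-z)^(wdeg M J) * ((-1) * ((1-z) * cnj z))^(wdeg M K)"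
      by (simp only: c1)
    also have "\<dots> = (-1)^(wdeg M K) * (((1-z)^(wdeg M J) * (1-z)^(wdeg M K)) * cnj z ^ (wdeg M K))"
      by (simp only: power_mult_distrib mult_ac)
    also have "(1-z)^(wdeg M J) * (1-z)^(wdeg M K) = (1-z)^d"
      by (simp only: dd power_add)
    also have "(1-z)^d * cnj z ^ (wdeg M K) = Hb d (wdeg M K) z + cnj (Ab d (wdeg M K) z)"
      by (rule circle_expand[OF z]) (simp add: dd)
    finally show ?thesis .
  qed
  have "modelP M d \<alpha> (hdisc M v z) = (\<Sum>(J,K)\<in>IS M d. tt M \<alpha> v J K *
         ((-1)^(wdeg M K) * (Hb d (wdeg M K) z + cnj (Ab d (wdeg M K) z))))"
    unfolding modelP_hdisc
  proof (intro sum.cong refl, clarify)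
    fix J K assume jk: "(J,K) \<in> IS M d"
    show "tt M \<alpha> v J K * ((1-z)^(wdeg M J) * cnj (1-z)^(wdeg M K)) = tt M \<alpha> v J K *
         ((-1)^(wdeg M K) * (Hb d (wdeg M K) z + cnj (Ab d (wdeg M K) z)))"
      by (simp only: tm[OF jk])
  qed
  then have "Re (modelP M d \<alpha> (hdisc M v z)) = (\<Sum>(J,K)\<in>IS M d. Re (tt M \<alpha> v J K *
         ((-1)^(wdeg M K) * (Hb d (wdeg M K) z + cnj (Ab d (wdeg M K) z)))))"
    by (simp add: Re_sum case_prod_beta)
  also have "\<dots> = (\<Sum>(J,K)\<in>IS M d. Re ((-1)^(wdeg M K) * tt M \<alpha> v J K * Hb d (wdeg M K) z
      + cnj ((-1)^(wdeg M K) * tt M \<alpha> v J K) * Ab d (wdeg M K) z))"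
  proof (intro sum.cong refl, clarify)
    fix J K
    let ?s = "(-1)^(wdeg M K) * tt M \<alpha> v J K"
    have "tt M \<alpha> v J K * ((-1)^(wdeg M K) * (Hb d (wdeg M K) z + cnj (Ab d (wdeg M K) z)))
       = ?s * Hb d (wdeg M K) z + ?s * cnj (Ab d (wdeg M K) z)"
      by (simp only: algebra_simps)
    then show "Re (tt M \<alpha> v J K * ((-1)^(wdeg M K) * (Hb d (wdeg M K) z + cnj (Ab d (wdeg M K) z))))
      = Re (?s * Hb d (wdeg M K) z + cnj ?s * Ab d (wdeg M K) z)"
      by (simp only: plus_complex.sel Re_mult_cnj_swap)
  qed
  also have "\<dots> = Re (G0 M d \<alpha> v z)"
    unfolding G0_def by (simp add: Re_sum case_prod_beta)
  finally show ?thesis .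
qed

lemma modelP_hdisc_1:
  assumes M_pos: "\<forall>i. M i > 0"
    and no_harm: "\<forall>J K. (J = (\<lambda>_. 0) \<or> K = (\<lambda>_. 0)) \<longrightarrow> \<alpha> J K = 0"
  shows "modelP M d \<alpha> (hdisc M v 1) = 0"
  unfolding modelP_hdisc
proof (intro sum.neutral ballI, clarify)
  fix J K
  show "tt M \<alpha> v J K * ((1 - 1)^(wdeg M J) * cnj (1 - 1)^(wdeg M K)) = 0"
  proof (cases "wdeg M J = 0")
    case True
    then have "J = (\<lambda>_. 0)" using wdeg_zero[OF M_pos] by blast
    then show ?thesis using no_harm by (simp add: tt_def)
  qed simp
qed

lemma holo_zero_from_re:
  fixes p :: "complex \<Rightarrow> complex"
  assumes hol: "p holomorphic_on UNIV"
    and re0: "\<And>z. norm z = 1 \<Longrightarrow> Re (p z) = 0"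
    and p1: "p 1 = 0"
  shows "\<And>z. z \<in> ball 0 1 \<Longrightarrow> p z = 0"
proof -
  have cont: "continuous_on UNIV p" using hol by (simp add: holomorphic_on_imp_continuous_on)
  have le: "Re (q z) \<le> 0" if "q holomorphic_on UNIV" "\<And>z. norm z = 1 \<Longrightarrow> Re (q z) \<le> 0" "z \<in> cball 0 1"
    for q :: "complex \<Rightarrow> complex" and z
  proof (rule maximum_real_frontier[of q "cball 0 1" 0 z])
    show "q holomorphic_on interior (cball 0 1)"
      using that(1) holomorphic_on_subset by blast
    show "continuous_on (closure (cball 0 1)) q"
      using that(1) holomorphic_on_imp_continuous_on continuous_on_subset by blast
  qed (use that in \<open>auto simp: frontier_cball\<close>)
  have reball: "Re (p z) = 0" if "z \<in> ball 0 1" for z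
  proof -
    have "Re (p z) \<le> 0" using le[of p z] hol re0 that by auto
    moreover have "Re ((\<lambda>z. - p z) z) \<le> 0"
      using le[of "\<lambda>z. - p z" z] hol re0 that by (auto intro: holomorphic_intros)
    ultimately show ?thesis by simp
  qed
  have const: "p constant_on ball 0 1"
  proof (rule ccontr)
    assume nc: "\<not> p constant_on ball 0 1"
    have "open (p ` ball 0 1)"
      by (rule open_mapping_thm[OF _ _ _ _ _ nc])
        (auto intro: holomorphic_on_subset[OF hol] simp: convex_connected)
    moreover have "p 0 \<in> p ` ball 0 1" by simp
    ultimately obtain e where e: "e > 0" "ball (p 0) e \<subseteq> p ` ball 0 1"
      by (meson open_contains_ball)
    have "p 0 + of_real (e/2) \<in> ball (p 0) e" using e by (simp add: dist_norm)
    then have "p 0 + of_real (e/2) \<in> p ` ball 0 1" by (rule subsetD[OF e(2)])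
    then obtain w where w2: "p 0 + of_real (e/2) = p w" and w1: "w \<in> ball 0 1" by (rule imageE)
    have w: "w \<in> ball 0 1" "p w = p 0 + of_real (e/2)" using w1 w2 by auto
    have "Re (p w) = 0" "Re (p 0) = 0" using reball w(1) by auto
    then show False using w(2) e by simp
  qed
  then obtain c where c: "\<And>z. z \<in> ball 0 1 \<Longrightarrow> p z = c"
    unfolding constant_on_def by blast
  have "p 1 = c"
  proof (rule continuous_constant_on_closure[of "ball 0 1" p])
    show "continuous_on (closure (ball 0 1)) p" by (rule continuous_on_subset[OF cont]) simp
    show "\<And>x. x \<in> ball 0 1 \<Longrightarrow> p x = c" by (rule c)
    show "1 \<in> closure (ball (0::complex) 1)" by simp
  qed
  then show "\<And>z. z \<in> ball 0 1 \<Longrightarrow> p z = 0" using c p1 by simp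
qed



lemma Hb_holo: "(\<lambda>z. Hb d b z) holomorphic_on S"
  unfolding Hb_def by (intro holomorphic_intros)

lemma Ab_holo: "(\<lambda>z. Ab d b z) holomorphic_on S"
  unfolding Ab_def by (intro holomorphic_intros)

lemma G0_holo: "(\<lambda>z. G0 M d \<alpha> v z) holomorphic_on S"
  unfolding G0_def
  by (intro holomorphic_on_sum) (auto simp: case_prod_beta intro!: holomorphic_intros Hb_holo Ab_holo)

lemma gexp_holo: "(\<lambda>z. gexp M d \<alpha> v z) holomorphic_on S"
  unfolding gexp_def by (intro holomorphic_intros G0_holo)

lemma g_eq:
  fixes M :: "'n::finite \<Rightarrow> nat" and g :: "complex^'n \<Rightarrow> complex poly"
  assumes M_pos: "\<forall>i. M i > 0"
    and no_harm: "\<forall>J K. (J = (\<lambda>_. 0) \<or> K = (\<lambda>_. 0)) \<longrightarrow> \<alpha> J K = 0"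
    and g_one: "\<forall>v. poly (g v) 1 = 0"
    and g_bdry: "\<forall>v. \<forall>\<zeta>\<in>sphere 0 1. Re (poly (g v) \<zeta>) = Re (modelP M d \<alpha> (hdisc M v \<zeta>))"
    and z: "z \<in> ball 0 1"
  shows "poly (g v) z = gexp M d \<alpha> v z"
proof -
  have re1: "Re (G0 M d \<alpha> v 1) = 0"
    using re_boundary[of 1 M d \<alpha> v] modelP_hdisc_1[OF M_pos no_harm] by simp
  have "(\<lambda>z. poly (g v) z - gexp M d \<alpha> v z) z = 0"
  proof (rule holo_zero_from_re[OF _ _ _ z])
    show "(\<lambda>z. poly (g v) z - gexp M d \<alpha> v z) holomorphic_on UNIV"
      by (intro holomorphic_intros gexp_holo)
    show "Re (poly (g v) w - gexp M d \<alpha> v w) = 0" if "norm w = 1" for w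
    proof -
      have "Re (poly (g v) w) = Re (modelP M d \<alpha> (hdisc M v w))" using g_bdry that by auto
      also have "\<dots> = Re (G0 M d \<alpha> v w)" by (rule re_boundary[OF that])
      finally show ?thesis using re1 by (simp add: gexp_def)
    qed
    show "poly (g v) 1 - gexp M d \<alpha> v 1 = 0" using g_one by (simp add: gexp_def)
  qed
  then show ?thesis by simp
qed



lemma has_derivative_vec_lambda:
  fixes f :: "'i::finite \<Rightarrow> 'a::euclidean_space \<Rightarrow> 'b::real_normed_vector"
  assumes d: "\<And>i. (f i has_derivative f' i) F"
  shows "((\<lambda>x. \<chi> i. f i x) has_derivative (\<lambda>h. \<chi> i. f' i h)) F"
  unfolding has_derivative_def
proof (intro conjI)
  have "linear (\<lambda>h. \<chi> i. f' i h)"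
  proof (rule linearI)
    fix x y show "(\<chi> i. f' i (x + y)) = (\<chi> i. f' i x) + (\<chi> i. f' i y)"
      using d by (simp add: vec_eq_iff has_derivative_def linear_add bounded_linear.linear)
  next
    fix c :: real and x show "(\<chi> i. f' i (c *\<^sub>R x)) = c *\<^sub>R (\<chi> i. f' i x)"
      using d by (simp add: vec_eq_iff has_derivative_def linear_scale bounded_linear.linear)
  qed
  then show "bounded_linear (\<lambda>h. \<chi> i. f' i h)" by (simp add: linear_conv_bounded_linear)
  let ?L = "Lim F (\<lambda>x. x)"
  have "((\<lambda>y. \<chi> i. ((f i y - f i ?L) - f' i (y - ?L)) /\<^sub>R norm (y - ?L)) \<longlongrightarrow> (\<chi> i. 0)) F"
    by (rule tendsto_vec_lambda) (use d in \<open>simp add: has_derivative_def\<close>)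
  moreover have "(\<lambda>y. \<chi> i. ((f i y - f i ?L) - f' i (y - ?L)) /\<^sub>R norm (y - ?L))
      = (\<lambda>y. (((\<chi> i. f i y) - (\<chi> i. f i ?L)) - (\<chi> i. f' i (y - ?L))) /\<^sub>R norm (y - ?L))"
    by (simp add: vec_eq_iff fun_eq_iff)
  moreover have "(\<chi> i. 0) = (0 :: 'b^'i)" by (simp add: vec_eq_iff)
  ultimately show "((\<lambda>y. (((\<chi> i. f i y) - (\<chi> i. f i ?L)) - (\<chi> i. f' i (y - ?L))) /\<^sub>R norm (y - ?L)) \<longlongrightarrow> 0) F"
    by simp
qed

lemma has_derivative_vec_nth[derivative_intros]:
  "(f has_derivative f') F \<Longrightarrow> ((\<lambda>x. f x $ i) has_derivative (\<lambda>x. f' x $ i)) F"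
  using bounded_linear.has_derivative[OF bounded_linear_vec_nth, of f f' F i] by simp

definition Phi :: "('n::finite \<Rightarrow> nat) \<Rightarrow> nat \<Rightarrow> (('n \<Rightarrow> nat) \<Rightarrow> ('n \<Rightarrow> nat) \<Rightarrow> complex)
   \<Rightarrow> (complex^'n) \<times> complex \<Rightarrow> (complex^'n) \<times> complex" where
  "Phi M d \<alpha> p = (hdisc M (fst p) (snd p), gexp M d \<alpha> (fst p) (snd p))"

lemma Phi_deriv_ex: "\<exists>D. (Phi M d \<alpha> has_derivative D) (at p)"
proof -
  have "\<exists>D1. ((\<lambda>p. hdisc M (fst p) (snd p)) has_derivative D1) (at p)"
    unfolding hdisc_def
    by (rule exI, (rule has_derivative_vec_lambda derivative_intros)+)
  then obtain D1 where D1: "((\<lambda>p. hdisc M (fst p) (snd p)) has_derivative D1) (at p)" by blast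
  have "\<exists>D2. ((\<lambda>p. gexp M d \<alpha> (fst p) (snd p)) has_derivative D2) (at p)"
    unfolding gexp_def G0_def tt_def mono_def cvec_def Hb_def Ab_def vec_lambda_beta case_prod_beta
    by (rule exI, (rule derivative_intros)+)
  then obtain D2 where D2: "((\<lambda>p. gexp M d \<alpha> (fst p) (snd p)) has_derivative D2) (at p)" by blast
  have "(Phi M d \<alpha> has_derivative (\<lambda>h. (D1 h, D2 h))) (at p)"
    unfolding Phi_def[abs_def] by (rule has_derivative_Pair[OF D1 D2])
  then show ?thesis by blast
qed



lemma curve_deriv:
  fixes \<Phi> :: "'a::real_normed_vector \<Rightarrow> 'b::real_normed_vector" and \<gamma> :: "real \<Rightarrow> 'a"
    and L :: "'b \<Rightarrow> 'c::real_normed_vector"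
  assumes dP: "(\<Phi> has_derivative \<Phi>') (at (\<gamma> 0))"
    and dg: "(\<gamma> has_derivative (\<lambda>s. s *\<^sub>R w)) (at 0)"
    and L: "bounded_linear L"
    and dL: "((\<lambda>s. L (\<Phi> (\<gamma> s))) has_derivative (\<lambda>s. s *\<^sub>R c)) (at 0)"
  shows "L (\<Phi>' w) = c"
proof -
  have "((\<lambda>s. \<Phi> (\<gamma> s)) has_derivative (\<lambda>s. \<Phi>' (s *\<^sub>R w))) (at 0)"
    using has_derivative_compose[OF dg dP] by simp
  then have "((\<lambda>s. L (\<Phi> (\<gamma> s))) has_derivative (\<lambda>s. L (\<Phi>' (s *\<^sub>R w)))) (at 0)"
    by (rule bounded_linear.has_derivative[OF L])
  then have "(\<lambda>s. L (\<Phi>' (s *\<^sub>R w))) = (\<lambda>s. s *\<^sub>R c)"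
    using dL has_derivative_unique by blast
  then show ?thesis by (metis scaleR_one)
qed

definition Hd :: "nat \<Rightarrow> nat \<Rightarrow> complex \<Rightarrow> complex" where
  "Hd d b z = (\<Sum>j\<in>{b..d}. of_nat (d choose j) * (-1)^j * (of_nat (j-b) * z^(j-b-1)))"

definition Ad :: "nat \<Rightarrow> nat \<Rightarrow> complex \<Rightarrow> complex" where
  "Ad d b z = (\<Sum>j<b. of_nat (d choose j) * (-1)^j * (of_nat (b-j) * z^(b-j-1)))"

lemma Hb_deriv: "(Hb d b has_field_derivative Hd d b z) (at z)"
  unfolding Hb_def[abs_def] Hd_def
  by (auto intro!: derivative_eq_intros sum.cong)

lemma Ab_deriv: "(Ab d b has_field_derivative Ad d b z) (at z)"
  unfolding Ab_def[abs_def] Ad_def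
  by (auto intro!: derivative_eq_intros sum.cong)

lemma term_deriv:
  fixes H :: "complex \<Rightarrow> complex"
  assumes "(H has_field_derivative H') (at 0)"
  shows "((\<lambda>t. C * exp (t * W) * (H (t * e) - H1)) has_field_derivative
           C * (W * (H 0 - H1) + H' * e)) (at 0)"
proof -
  have "((\<lambda>t. H (t * e)) has_field_derivative H' * e) (at 0)"
  proof (rule DERIV_chain2[where f=H and g="\<lambda>t. t*e"])
    show "(H has_field_derivative H') (at ((\<lambda>t. t*e) 0))" using assms by simp
    show "((\<lambda>t. t * e) has_field_derivative e) (at 0)" by (auto intro!: derivative_eq_intros)
  qed
  then show ?thesis
    by (auto intro!: derivative_eq_intros simp: algebra_simps)
qed



definition rot :: "('n::finite \<Rightarrow> nat) \<Rightarrow> complex \<Rightarrow> complex^'n \<Rightarrow> complex^'n" where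
  "rot M c v = (\<chi> i. c^(M i) * v$i)"

lemma mono_rot: "mono (rot M c v) J = c^(wdeg M J) * mono v J"
  using mono_hdisc[of M v "1 - c" J] by (simp add: hdisc_def rot_def)

lemma mono_cvec_rot: "mono (cvec (rot M c v)) K = cnj c^(wdeg M K) * mono (cvec v) K"
  using mono_cvec_hdisc[of M v "1 - c" K] by (simp add: hdisc_def rot_def)

lemma tt_rot: "tt M \<alpha> (rot M c v) J K = c^(wdeg M J) * cnj c^(wdeg M K) * tt M \<alpha> v J K"
  unfolding tt_def mono_rot mono_cvec_rot by (simp add: mult_ac)

lemma rot_1: "rot M 1 v = v"
  by (simp add: rot_def vec_eq_iff)

lemma gexp_sum: "gexp M d \<alpha> v z = (\<Sum>(J,K)\<in>IS M d.
   (-1)^(wdeg M K) * tt M \<alpha> v J K * (Hb d (wdeg M K) z - Hb d (wdeg M K) 1)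
   + cnj ((-1)^(wdeg M K) * tt M \<alpha> v J K) * (Ab d (wdeg M K) z - Ab d (wdeg M K) 1))"
  unfolding gexp_def G0_def
  by (simp add: sum_subtractf[symmetric] case_prod_beta right_diff_distrib algebra_simps)

definition Xc where
  "Xc M d \<alpha> v = (\<Sum>(J,K)\<in>IS M d.
     (-1)^(wdeg M K) * tt M \<alpha> v J K * (of_nat (wdeg M J) * (Hb d (wdeg M K) 0 - Hb d (wdeg M K) 1) + Hd d (wdeg M K) 0)
   + cnj ((-1)^(wdeg M K) * tt M \<alpha> v J K) * (of_nat (wdeg M K) * (Ab d (wdeg M K) 0 - Ab d (wdeg M K) 1) + Ad d (wdeg M K) 0))"

definition Yc where
  "Yc M d \<alpha> v = (\<Sum>(J,K)\<in>IS M d.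
     (-1)^(wdeg M K) * tt M \<alpha> v J K * (of_nat (wdeg M K) * (Hb d (wdeg M K) 0 - Hb d (wdeg M K) 1))
   + cnj ((-1)^(wdeg M K) * tt M \<alpha> v J K) * (of_nat (wdeg M J) * (Ab d (wdeg M K) 0 - Ab d (wdeg M K) 1)))"

lemma F1:
  assumes D: "(Phi M d \<alpha> has_derivative D) (at (v0, 0))"
  shows "fst (D (a, 0)) = a"
proof (rule curve_deriv[where \<Phi> = "Phi M d \<alpha>" and \<Phi>' = D and w = "(a, 0)" and c = a and \<gamma> = "\<lambda>s. (v0 + s *\<^sub>R a, 0)" and L = fst])
  show "(Phi M d \<alpha> has_derivative D) (at ((\<lambda>s. (v0 + s *\<^sub>R a, 0::complex)) 0))" using D by simp
  have "((\<lambda>s. (v0 + s *\<^sub>R a, 0::complex)) has_derivative (\<lambda>s. (s *\<^sub>R a, 0))) (at 0)"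
    by (auto intro!: derivative_eq_intros)
  then show "((\<lambda>s. (v0 + s *\<^sub>R a, 0::complex)) has_derivative (\<lambda>s. s *\<^sub>R (a, 0))) (at 0)"
    by simp
  show "bounded_linear fst" by (rule bounded_linear_fst)
  have "(\<lambda>s. fst (Phi M d \<alpha> (v0 + s *\<^sub>R a, 0))) = (\<lambda>s. v0 + s *\<^sub>R a)"
    by (simp add: Phi_def hdisc_def vec_eq_iff fun_eq_iff)
  moreover have "((\<lambda>s. v0 + s *\<^sub>R a) has_derivative (\<lambda>s. s *\<^sub>R a)) (at 0)"
    by (auto intro!: derivative_eq_intros)
  ultimately show "((\<lambda>s. fst (Phi M d \<alpha> (v0 + s *\<^sub>R a, 0))) has_derivative (\<lambda>s. s *\<^sub>R a)) (at 0)"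
    by simp
qed



definition Qf where
  "Qf M d \<alpha> v0 e t = (\<Sum>(J,K)\<in>IS M d.
     (-1)^(wdeg M K) * tt M \<alpha> v0 J K * exp (t * (of_nat (wdeg M J) * e + of_nat (wdeg M K) * cnj e))
        * (Hb d (wdeg M K) (t * e) - Hb d (wdeg M K) 1)
   + cnj ((-1)^(wdeg M K) * tt M \<alpha> v0 J K) * exp (t * (of_nat (wdeg M J) * cnj e + of_nat (wdeg M K) * e))
        * (Ab d (wdeg M K) (t * e) - Ab d (wdeg M K) 1))"

lemma exp_pow_cnj:
  "exp (of_real s * e) ^ a * cnj (exp (of_real s * e)) ^ b
     = exp (of_real s * (of_nat a * e + of_nat b * cnj e))"
proof -
  have "exp (of_real s * e) ^ a = exp (of_nat a * (of_real s * e))" by (rule exp_of_nat_mult[symmetric])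
  moreover have "cnj (exp (of_real s * e)) ^ b = exp (of_nat b * (of_real s * cnj e))"
    by (simp add: exp_cnj exp_of_nat_mult[symmetric])
  ultimately show ?thesis by (simp add: exp_add[symmetric] algebra_simps)
qed

lemma Qf_eq:
  "gexp M d \<alpha> (rot M (exp (of_real s * e)) v0) (of_real s * e) = Qf M d \<alpha> v0 e (of_real s)"
  unfolding gexp_sum Qf_def
proof (intro sum.cong refl, clarify)
  fix J K
  let ?c = "exp (of_real s * e)"
  have 1: "tt M \<alpha> (rot M ?c v0) J K = exp (of_real s * (of_nat (wdeg M J) * e + of_nat (wdeg M K) * cnj e)) * tt M \<alpha> v0 J K"
    unfolding tt_rot exp_pow_cnj by simp
  have 2: "cnj (exp (of_real s * (of_nat (wdeg M J) * e + of_nat (wdeg M K) * cnj e)))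
      = exp (of_real s * (of_nat (wdeg M J) * cnj e + of_nat (wdeg M K) * e))"
    by (simp add: exp_cnj)
  show "(-1)^(wdeg M K) * tt M \<alpha> (rot M ?c v0) J K * (Hb d (wdeg M K) (of_real s * e) - Hb d (wdeg M K) 1)
   + cnj ((-1)^(wdeg M K) * tt M \<alpha> (rot M ?c v0) J K) * (Ab d (wdeg M K) (of_real s * e) - Ab d (wdeg M K) 1)
   = (-1)^(wdeg M K) * tt M \<alpha> v0 J K * exp (of_real s * (of_nat (wdeg M J) * e + of_nat (wdeg M K) * cnj e))
        * (Hb d (wdeg M K) (of_real s * e) - Hb d (wdeg M K) 1)
   + cnj ((-1)^(wdeg M K) * tt M \<alpha> v0 J K) * exp (of_real s * (of_nat (wdeg M J) * cnj e + of_nat (wdeg M K) * e))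
        * (Ab d (wdeg M K) (of_real s * e) - Ab d (wdeg M K) 1)"
    unfolding 1 complex_cnj_mult 2 by (simp only: mult_ac)
qed

lemma Qf_deriv:
  "(Qf M d \<alpha> v0 e has_field_derivative Xc M d \<alpha> v0 * e + Yc M d \<alpha> v0 * cnj e) (at 0)"
proof -
  have "(Qf M d \<alpha> v0 e has_field_derivative
     (\<Sum>(J,K)\<in>IS M d.
        (-1)^(wdeg M K) * tt M \<alpha> v0 J K * ((of_nat (wdeg M J) * e + of_nat (wdeg M K) * cnj e)
           * (Hb d (wdeg M K) 0 - Hb d (wdeg M K) 1) + Hd d (wdeg M K) 0 * e)
      + cnj ((-1)^(wdeg M K) * tt M \<alpha> v0 J K) * ((of_nat (wdeg M J) * cnj e + of_nat (wdeg M K) * e)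
           * (Ab d (wdeg M K) 0 - Ab d (wdeg M K) 1) + Ad d (wdeg M K) 0 * e))) (at 0)"
    unfolding Qf_def[abs_def] case_prod_beta
    by (intro DERIV_sum DERIV_add term_deriv Hb_deriv Ab_deriv)
  moreover have "(\<Sum>(J,K)\<in>IS M d.
        (-1)^(wdeg M K) * tt M \<alpha> v0 J K * ((of_nat (wdeg M J) * e + of_nat (wdeg M K) * cnj e)
           * (Hb d (wdeg M K) 0 - Hb d (wdeg M K) 1) + Hd d (wdeg M K) 0 * e)
      + cnj ((-1)^(wdeg M K) * tt M \<alpha> v0 J K) * ((of_nat (wdeg M J) * cnj e + of_nat (wdeg M K) * e)
           * (Ab d (wdeg M K) 0 - Ab d (wdeg M K) 1) + Ad d (wdeg M K) 0 * e))
     = Xc M d \<alpha> v0 * e + Yc M d \<alpha> v0 * cnj e"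
    unfolding Xc_def Yc_def sum_distrib_right sum.distrib[symmetric]
    by (intro sum.cong refl) (auto simp: algebra_simps)
  ultimately show ?thesis by simp
qed



lemma vd_to_d: "(f has_vector_derivative c) F \<Longrightarrow> (f has_derivative (\<lambda>s. s *\<^sub>R c)) F"
  by (simp add: has_vector_derivative_def)

lemma F2:
  assumes D: "(Phi M d \<alpha> has_derivative D) (at (v0, 0))"
  shows "D ((\<chi> i. of_nat (M i) * e * v0$i), e) = (0, Xc M d \<alpha> v0 * e + Yc M d \<alpha> v0 * cnj e)"
proof -
  define \<gamma> where "\<gamma> = (\<lambda>s::real. (rot M (exp (of_real s * e)) v0, of_real s * e))"
  define w where "w = ((\<chi> i. of_nat (M i) * e * v0$i), e)"
  have g0: "\<gamma> 0 = (v0, 0)" by (simp add: \<gamma>_def rot_1)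
  have DD: "(Phi M d \<alpha> has_derivative D) (at (\<gamma> 0))" using D g0 by simp
  have dg: "(\<gamma> has_derivative (\<lambda>s. s *\<^sub>R w)) (at 0)"
  proof -
    have c1: "((\<lambda>s::real. exp (of_real s * e)^(M i) * v0$i) has_derivative (\<lambda>s. s *\<^sub>R (of_nat (M i) * e * v0$i))) (at 0)" for i
    proof (rule vd_to_d)
      have "((\<lambda>t. exp (t * e)^(M i) * v0$i) has_field_derivative of_nat (M i) * e * v0$i) (at (of_real 0))"
        by (auto intro!: derivative_eq_intros)
      from has_vector_derivative_real_field[OF this]
      show "((\<lambda>s::real. exp (of_real s * e)^(M i) * v0$i) has_vector_derivative (of_nat (M i) * e * v0$i)) (at 0)"
        by simp
    qed
    have c2: "((\<lambda>s::real. of_real s * e) has_derivative (\<lambda>s. s *\<^sub>R e)) (at 0)"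
    proof (rule vd_to_d)
      have "((\<lambda>t. t * e) has_field_derivative e) (at (of_real 0))"
        by (auto intro!: derivative_eq_intros)
      from has_vector_derivative_real_field[OF this]
      show "((\<lambda>s::real. of_real s * e) has_vector_derivative e) (at 0)" by simp
    qed
    have "(\<gamma> has_derivative (\<lambda>h. ((\<chi> i. h *\<^sub>R (of_nat (M i) * e * v0$i)), h *\<^sub>R e))) (at 0)"
      unfolding \<gamma>_def rot_def
      by (intro has_derivative_Pair has_derivative_vec_lambda c1 c2)
    moreover have "(\<lambda>h. ((\<chi> i. h *\<^sub>R (of_nat (M i) * e * v0$i)), h *\<^sub>R e)) = (\<lambda>s. s *\<^sub>R w)"
      by (simp add: w_def fun_eq_iff vec_eq_iff)
    ultimately show ?thesis by simp
  qed
  have fstD: "fst (D w) = 0"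
  proof (rule curve_deriv[where \<Phi> = "Phi M d \<alpha>" and \<Phi>' = D and w = w and c = 0 and \<gamma> = \<gamma> and L = fst])
    show "bounded_linear fst" by (rule bounded_linear_fst)
    have c1: "((\<lambda>s::real. (1 - of_real s * e)^(M i) * (exp (of_real s * e)^(M i) * v0$i)) has_derivative (\<lambda>s. s *\<^sub>R 0)) (at 0)" for i
    proof (rule vd_to_d)
      have "((\<lambda>t. (1 - t * e)^(M i) * (exp (t * e)^(M i) * v0$i)) has_field_derivative 0) (at (of_real 0))"
        by (auto intro!: derivative_eq_intros simp: algebra_simps)
      from has_vector_derivative_real_field[OF this]
      show "((\<lambda>s::real. (1 - of_real s * e)^(M i) * (exp (of_real s * e)^(M i) * v0$i)) has_vector_derivative 0) (at 0)"
        by simp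
    qed
    have "((\<lambda>s. fst (Phi M d \<alpha> (\<gamma> s))) has_derivative (\<lambda>h. \<chi> i. h *\<^sub>R (0::complex))) (at 0)"
      unfolding \<gamma>_def Phi_def hdisc_def rot_def fst_conv snd_conv vec_lambda_beta
      by (intro has_derivative_vec_lambda c1)
    moreover have "(\<lambda>h::real. \<chi> i. h *\<^sub>R (0::complex)) = (\<lambda>s. s *\<^sub>R (0::complex^'a))"
      by (simp add: fun_eq_iff vec_eq_iff)
    ultimately show "((\<lambda>s. fst (Phi M d \<alpha> (\<gamma> s))) has_derivative (\<lambda>s. s *\<^sub>R 0)) (at 0)" by simp
  qed (use DD dg in auto)
  have sndD: "snd (D w) = Xc M d \<alpha> v0 * e + Yc M d \<alpha> v0 * cnj e"
  proof (rule curve_deriv[where \<Phi> = "Phi M d \<alpha>" and \<Phi>' = D and w = w and \<gamma> = \<gamma> and L = snd])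
    show "bounded_linear snd" by (rule bounded_linear_snd)
    have "(\<lambda>s. snd (Phi M d \<alpha> (\<gamma> s))) = (\<lambda>s. Qf M d \<alpha> v0 e (of_real s))"
      by (simp add: \<gamma>_def Phi_def Qf_eq fun_eq_iff)
    moreover have "((\<lambda>s::real. Qf M d \<alpha> v0 e (of_real s)) has_vector_derivative (Xc M d \<alpha> v0 * e + Yc M d \<alpha> v0 * cnj e)) (at 0)"
      by (rule has_vector_derivative_real_field) (use Qf_deriv in simp)
    ultimately show "((\<lambda>s. snd (Phi M d \<alpha> (\<gamma> s))) has_derivative (\<lambda>s. s *\<^sub>R (Xc M d \<alpha> v0 * e + Yc M d \<alpha> v0 * cnj e))) (at 0)"
      by (simp add: has_vector_derivative_def)
  qed (use DD dg in auto)
  show ?thesis using fstD sndD by (simp add: w_def prod_eq_iff)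
qed



lemma absorb_nat: "Suc k * (n choose Suc k) = (n - k) * (n choose k)"
proof (cases n)
  case 0 then show ?thesis by simp
next
  case (Suc m)
  have 1: "Suc k * (Suc m choose Suc k) = Suc m * (m choose k)" by (rule Suc_times_binomial)
  have 2: "(Suc m - k) * (Suc m choose k) = Suc m * (m choose k)"
    using binomial_absorb_comp[of "Suc m" k] by (simp del: binomial_Suc_Suc)
  show ?thesis unfolding Suc using 1 2 by (simp only:)
qed

lemma sum_single:
  assumes "finite A" "\<And>j. j \<in> A \<Longrightarrow> j \<noteq> a \<Longrightarrow> f j = 0"
  shows "sum f A = (if a \<in> A then f a else 0)"
proof (cases "a \<in> A")
  case True
  have "sum f A = f a + sum f (A - {a})" using True assms(1) by (simp add: sum.remove)
  also have "sum f (A - {a}) = 0" using assms(2) by (intro sum.neutral) auto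
  finally show ?thesis using True by simp
next
  case False
  then show ?thesis using assms by (auto intro!: sum.neutral)
qed

lemma alt_partial:
  "(\<Sum>j<Suc k. (-1)^j * of_nat (Suc n choose j) :: complex) = (-1)^k * of_nat (n choose k)"
proof (induction k)
  case 0 then show ?case by simp
next
  case (Suc k)
  have "(\<Sum>j<Suc (Suc k). (-1)^j * of_nat (Suc n choose j) :: complex)
      = (\<Sum>j<Suc k. (-1)^j * of_nat (Suc n choose j)) + (-1)^(Suc k) * of_nat (Suc n choose Suc k)"
    by (rule sum.lessThan_Suc)
  also have "\<dots> = (-1)^k * of_nat (n choose k) + (-1)^(Suc k) * of_nat (Suc n choose Suc k)"
    by (simp only: Suc.IH)
  also have "\<dots> = (-1)^(Suc k) * of_nat (n choose Suc k)"
    by (simp add: algebra_simps)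
  finally show ?case .
qed

lemma Ab_1:
  "Ab (Suc n) (Suc k) 1 = (-1)^k * of_nat (n choose k)"
  unfolding Ab_def using alt_partial[where k=k and n=n] by (simp add: mult_ac)

lemma Hb_1:
  assumes "b \<le> Suc n"
  shows "Hb (Suc n) b 1 = - Ab (Suc n) b 1"
proof -
  have "(\<Sum>j\<le>Suc n. (-1)^j * of_nat (Suc n choose j) :: complex) = 0"
    by (rule choose_alternating_sum) simp
  also have "{..Suc n} = {..<b} \<union> {b..Suc n}" using assms by auto
  finally have "(\<Sum>j<b. (-1)^j * of_nat (Suc n choose j) :: complex)
       + (\<Sum>j\<in>{b..Suc n}. (-1)^j * of_nat (Suc n choose j)) = 0"
    by (subst (asm) sum.union_disjoint) auto
  then show ?thesis unfolding Hb_def Ab_def by (simp add: mult_ac eq_neg_iff_add_eq_0 add.commute)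
qed

lemma Hb_0:
  assumes "b \<le> d"
  shows "Hb d b 0 = (-1)^b * of_nat (d choose b)"
  unfolding Hb_def by (subst sum_single[where a=b]) (use assms in auto)

lemma Ab_0:
  assumes "b \<ge> 1"
  shows "Ab d b 0 = 0"
  unfolding Ab_def by (intro sum.neutral) auto

lemma Hd_0:
  assumes "Suc b \<le> d"
  shows "Hd d b 0 = (-1)^(Suc b) * of_nat (d choose Suc b)"
  unfolding Hd_def by (subst sum_single[where a="Suc b"]) (use assms in auto)

lemma Ad_0:
  shows "Ad d (Suc k) 0 = (-1)^k * of_nat (d choose k)"
  unfolding Ad_def by (subst sum_single[where a=k]) auto



lemma nat_id1:
  assumes "k < n"
  shows "(n - k) * (n choose Suc k) = (n choose Suc k) + (n choose Suc (Suc k)) + Suc k * (n choose Suc (Suc k))"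
proof -
  have "Suc (Suc k) * (n choose Suc (Suc k)) = (n - Suc k) * (n choose Suc k)" by (rule absorb_nat)
  moreover have "n - k = Suc (n - Suc k)" using assms by simp
  ultimately show ?thesis by (simp add: algebra_simps)
qed

lemma nat_id2:
  assumes "k < n"
  shows "Suc k * (n choose k) = (Suc n choose k) + (n - k) * (n choose Suc (n - k))"
proof (cases k)
  case 0 then show ?thesis by simp
next
  case (Suc k')
  have a: "Suc k' * (n choose Suc k') = (n - k') * (n choose k')" by (rule absorb_nat)
  have s: "n choose (n - k') = n choose k'" using assms Suc by (simp add: binomial_symmetric[symmetric])
  have e: "Suc (n - Suc k') = n - k'" using assms Suc by simp
  have f: "n - k' = Suc (n - Suc k')" using assms Suc by simp
  show ?thesis unfolding Suc binomial_Suc_Suc e s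
    using a f by (simp add: algebra_simps)
qed

lemma sgn_sq: "((-1::complex)^k) * ((-1)^k * x) = x"
  by (simp add: mult.assoc[symmetric] power_add[symmetric])

definition pp :: "nat \<Rightarrow> nat \<Rightarrow> complex" where "pp d b = of_nat (b * ((d - 1) choose (b + 1)))"
definition qq :: "nat \<Rightarrow> nat \<Rightarrow> complex" where "qq d b = of_nat (b * ((d - 1) choose b))"

lemma closed_forms:
  assumes "k < n"
  shows "(-1)^(Suc k) * (of_nat (Suc n - Suc k) * (Hb (Suc n) (Suc k) 0 - Hb (Suc n) (Suc k) 1) + Hd (Suc n) (Suc k) 0)
           = pp (Suc n) (Suc k)"
    and "(-1)^(Suc k) * (of_nat (Suc k) * (Ab (Suc n) (Suc k) 0 - Ab (Suc n) (Suc k) 1) + Ad (Suc n) (Suc k) 0)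
           = pp (Suc n) (Suc n - Suc k)"
    and "(-1)^(Suc k) * (of_nat (Suc k) * (Hb (Suc n) (Suc k) 0 - Hb (Suc n) (Suc k) 1))
           = qq (Suc n) (Suc k)"
    and "(-1)^(Suc k) * (of_nat (Suc n - Suc k) * (Ab (Suc n) (Suc k) 0 - Ab (Suc n) (Suc k) 1))
           = qq (Suc n) (Suc n - Suc k)"
proof -
  let ?s = "(-1::complex)^k"
  have H0: "Hb (Suc n) (Suc k) 0 = - ?s * of_nat (Suc n choose Suc k)"
    using assms by (simp add: Hb_0)
  have H1: "Hb (Suc n) (Suc k) 1 = - ?s * of_nat (n choose k)"
    using assms by (simp add: Hb_1 Ab_1)
  have A0: "Ab (Suc n) (Suc k) 0 = 0" by (simp add: Ab_0)
  have A1: "Ab (Suc n) (Suc k) 1 = ?s * of_nat (n choose k)" by (simp add: Ab_1)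
  have D0: "Hd (Suc n) (Suc k) 0 = ?s * of_nat (Suc n choose Suc (Suc k))"
    using assms by (simp add: Hd_0)
  have E0: "Ad (Suc n) (Suc k) 0 = ?s * of_nat (Suc n choose k)" by (simp add: Ad_0)
  have m: "(-1::complex)^(Suc k) = - ?s" by simp
  have i1: "of_nat ((n - k) * (n choose Suc k)) = (of_nat ((n choose Suc k) + (n choose Suc (Suc k)) + Suc k * (n choose Suc (Suc k))) :: complex)"
    using nat_id1[OF assms] by (simp only:)
  have i2: "of_nat (Suc k * (n choose k)) = (of_nat ((Suc n choose k) + (n - k) * (n choose Suc (n - k))) :: complex)"
    using nat_id2[OF assms] by (simp only:)
  have nk: "(of_nat (n - k)::complex) = of_nat n - of_nat k" using assms by (simp add: of_nat_diff)
  have sym: "n choose (n - k) = n choose k" using assms by (simp add: binomial_symmetric[symmetric])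
  show "(-1)^(Suc k) * (of_nat (Suc n - Suc k) * (Hb (Suc n) (Suc k) 0 - Hb (Suc n) (Suc k) 1) + Hd (Suc n) (Suc k) 0)
           = pp (Suc n) (Suc k)"
    unfolding m H0 H1 D0 pp_def using i1 by (simp add: algebra_simps sgn_sq nk)
  show "(-1)^(Suc k) * (of_nat (Suc k) * (Ab (Suc n) (Suc k) 0 - Ab (Suc n) (Suc k) 1) + Ad (Suc n) (Suc k) 0)
           = pp (Suc n) (Suc n - Suc k)"
    unfolding m A0 A1 E0 pp_def using i2 by (simp add: algebra_simps sgn_sq)
  show "(-1)^(Suc k) * (of_nat (Suc k) * (Hb (Suc n) (Suc k) 0 - Hb (Suc n) (Suc k) 1))
           = qq (Suc n) (Suc k)"
    unfolding m H0 H1 qq_def by (simp add: algebra_simps sgn_sq)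
  show "(-1)^(Suc k) * (of_nat (Suc n - Suc k) * (Ab (Suc n) (Suc k) 0 - Ab (Suc n) (Suc k) 1))
           = qq (Suc n) (Suc n - Suc k)"
    unfolding m A0 A1 qq_def using sym by (simp add: algebra_simps sgn_sq nk)
qed



lemma term_cases:
  assumes M_pos: "\<forall>i. M i > 0"
    and no_harm: "\<forall>J K. (J = (\<lambda>_. 0) \<or> K = (\<lambda>_. 0)) \<longrightarrow> \<alpha> J K = 0"
    and jk: "(J,K) \<in> IS M d"
  shows "tt M \<alpha> v J K = 0 \<or> (\<exists>k n. wdeg M K = Suc k \<and> d = Suc n \<and> k < n \<and> wdeg M J = Suc n - Suc k)"
proof (cases "\<alpha> J K = 0")
  case True then show ?thesis by (simp add: tt_def)
next
  case False
  then have "J \<noteq> (\<lambda>_. 0)" "K \<noteq> (\<lambda>_. 0)" using no_harm by auto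
  then have "wdeg M J \<noteq> 0" "wdeg M K \<noteq> 0" using wdeg_zero[OF M_pos] by auto
  moreover have "d = wdeg M J + wdeg M K" using jk by (simp add: IS_def)
  ultimately show ?thesis
    by (intro disjI2 exI[of _ "wdeg M K - 1"] exI[of _ "d - 1"]) auto
qed

lemma Xc_closed:
  assumes M_pos: "\<forall>i. M i > 0"
    and no_harm: "\<forall>J K. (J = (\<lambda>_. 0) \<or> K = (\<lambda>_. 0)) \<longrightarrow> \<alpha> J K = 0"
  shows "Xc M d \<alpha> v = (\<Sum>(J,K)\<in>IS M d. tt M \<alpha> v J K * pp d (wdeg M K) + cnj (tt M \<alpha> v J K) * pp d (d - wdeg M K))"
  unfolding Xc_def
proof (intro sum.cong refl, clarify)
  fix J K assume jk: "(J,K) \<in> IS M d"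
  show "(-1)^(wdeg M K) * tt M \<alpha> v J K * (of_nat (wdeg M J) * (Hb d (wdeg M K) 0 - Hb d (wdeg M K) 1) + Hd d (wdeg M K) 0)
   + cnj ((-1)^(wdeg M K) * tt M \<alpha> v J K) * (of_nat (wdeg M K) * (Ab d (wdeg M K) 0 - Ab d (wdeg M K) 1) + Ad d (wdeg M K) 0)
   = tt M \<alpha> v J K * pp d (wdeg M K) + cnj (tt M \<alpha> v J K) * pp d (d - wdeg M K)"
  proof (cases "tt M \<alpha> v J K = 0")
    case True then show ?thesis by simp
  next
    case False
    then obtain k n where kn: "wdeg M K = Suc k" "d = Suc n" "k < n" "wdeg M J = Suc n - Suc k"
      using term_cases[OF M_pos no_harm jk] by blast
    let ?s = "(-1::complex)^(Suc k)" and ?t = "tt M \<alpha> v J K"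
    let ?X1 = "of_nat (Suc n - Suc k) * (Hb (Suc n) (Suc k) 0 - Hb (Suc n) (Suc k) 1) + Hd (Suc n) (Suc k) 0"
    let ?X2 = "of_nat (Suc k) * (Ab (Suc n) (Suc k) 0 - Ab (Suc n) (Suc k) 1) + Ad (Suc n) (Suc k) 0"
    have c: "cnj ?s = ?s" by simp
    have "?s * ?t * ?X1 + cnj (?s * ?t) * ?X2 = ?t * (?s * ?X1) + cnj ?t * (?s * ?X2)"
      unfolding complex_cnj_mult c by (simp only: mult_ac)
    also have "\<dots> = ?t * pp (Suc n) (Suc k) + cnj ?t * pp (Suc n) (Suc n - Suc k)"
      by (simp only: closed_forms(1,2)[OF kn(3)])
    finally show ?thesis unfolding kn .
  qed
qed

lemma Yc_closed:
  assumes M_pos: "\<forall>i. M i > 0"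
    and no_harm: "\<forall>J K. (J = (\<lambda>_. 0) \<or> K = (\<lambda>_. 0)) \<longrightarrow> \<alpha> J K = 0"
  shows "Yc M d \<alpha> v = (\<Sum>(J,K)\<in>IS M d. tt M \<alpha> v J K * qq d (wdeg M K) + cnj (tt M \<alpha> v J K) * qq d (d - wdeg M K))"
  unfolding Yc_def
proof (intro sum.cong refl, clarify)
  fix J K assume jk: "(J,K) \<in> IS M d"
  show "(-1)^(wdeg M K) * tt M \<alpha> v J K * (of_nat (wdeg M K) * (Hb d (wdeg M K) 0 - Hb d (wdeg M K) 1))
   + cnj ((-1)^(wdeg M K) * tt M \<alpha> v J K) * (of_nat (wdeg M J) * (Ab d (wdeg M K) 0 - Ab d (wdeg M K) 1))
   = tt M \<alpha> v J K * qq d (wdeg M K) + cnj (tt M \<alpha> v J K) * qq d (d - wdeg M K)"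
  proof (cases "tt M \<alpha> v J K = 0")
    case True then show ?thesis by simp
  next
    case False
    then obtain k n where kn: "wdeg M K = Suc k" "d = Suc n" "k < n" "wdeg M J = Suc n - Suc k"
      using term_cases[OF M_pos no_harm jk] by blast
    let ?s = "(-1::complex)^(Suc k)" and ?t = "tt M \<alpha> v J K"
    let ?X1 = "of_nat (Suc k) * (Hb (Suc n) (Suc k) 0 - Hb (Suc n) (Suc k) 1)"
    let ?X2 = "of_nat (Suc n - Suc k) * (Ab (Suc n) (Suc k) 0 - Ab (Suc n) (Suc k) 1)"
    have c: "cnj ?s = ?s" by simp
    have "?s * ?t * ?X1 + cnj (?s * ?t) * ?X2 = ?t * (?s * ?X1) + cnj ?t * (?s * ?X2)"
      unfolding complex_cnj_mult c by (simp only: mult_ac)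
    also have "\<dots> = ?t * qq (Suc n) (Suc k) + cnj ?t * qq (Suc n) (Suc n - Suc k)"
      by (simp only: closed_forms(3,4)[OF kn(3)])
    finally show ?thesis unfolding kn .
  qed
qed



lemma infinite_sphere_c: "infinite (sphere (0::complex) 1)"
proof
  assume fin: "finite (sphere (0::complex) 1)"
  have "connected (sphere (0::complex) 1)" by (rule connected_sphere) simp
  then have "sphere (0::complex) 1 = {} \<or> (\<exists>a. sphere (0::complex) 1 = {a})"
    using connected_finite_iff_sing fin by blast
  moreover have "1 \<in> sphere (0::complex) 1" "-1 \<in> sphere (0::complex) 1" by auto
  ultimately show False by (metis empty_iff singletonD one_neq_neg_one)
qed

lemma sum_rev_atMost: "(\<Sum>k\<le>d. F (d - k)) = (\<Sum>k\<le>(d::nat). F k)"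
  by (rule sum.reindex_bij_witness[where i="\<lambda>k. d - k" and j="\<lambda>k. d - k"]) auto

definition TT where
  "TT M d \<alpha> v k = (\<Sum>x\<in>{x\<in>IS M d. wdeg M (snd x) = k}. tt M \<alpha> v (fst x) (snd x))"

definition SS where
  "SS M d \<alpha> v k = TT M d \<alpha> v k + cnj (TT M d \<alpha> v (d - k))"

lemma wdeg_le_IS: "x \<in> IS M d \<Longrightarrow> wdeg M (snd x) \<le> d"
  by (auto simp: IS_def)

lemma group_IS:
  fixes g :: "_ \<Rightarrow> complex"
  assumes fin: "finite (IS M d)"
  shows "(\<Sum>x\<in>IS M d. f (wdeg M (snd x)) * g x) = (\<Sum>k\<le>d. f k * (\<Sum>x\<in>{x\<in>IS M d. wdeg M (snd x) = k}. g x))"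
proof -
  have "(\<Sum>x\<in>IS M d. f (wdeg M (snd x)) * g x)
      = (\<Sum>k\<le>d. (\<Sum>x\<in>{x. x\<in>IS M d \<and> wdeg M (snd x) = k}. f (wdeg M (snd x)) * g x))"
    by (rule sum.group[symmetric]) (use fin wdeg_le_IS in auto)
  also have "\<dots> = (\<Sum>k\<le>d. f k * (\<Sum>x\<in>{x\<in>IS M d. wdeg M (snd x) = k}. g x))"
  proof (intro sum.cong refl)
    fix k
    have "(\<Sum>x\<in>{x. x\<in>IS M d \<and> wdeg M (snd x) = k}. f (wdeg M (snd x)) * g x)
        = (\<Sum>x\<in>{x. x\<in>IS M d \<and> wdeg M (snd x) = k}. f k * g x)"
      by (intro sum.cong) auto
    then show "(\<Sum>x\<in>{x. x\<in>IS M d \<and> wdeg M (snd x) = k}. f (wdeg M (snd x)) * g x)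
        = f k * (\<Sum>x\<in>{x\<in>IS M d. wdeg M (snd x) = k}. g x)"
      by (simp add: sum_distrib_left)
  qed
  finally show ?thesis .
qed

lemma TT_0:
  assumes M_pos: "\<forall>i. M i > 0"
    and no_harm: "\<forall>J K. (J = (\<lambda>_. 0) \<or> K = (\<lambda>_. 0)) \<longrightarrow> \<alpha> J K = 0"
  shows "TT M d \<alpha> v 0 = 0" and "TT M d \<alpha> v d = 0"
proof -
  show "TT M d \<alpha> v 0 = 0" unfolding TT_def
  proof (intro sum.neutral ballI)
    fix x assume "x \<in> {x \<in> IS M d. wdeg M (snd x) = 0}"
    then have "snd x = (\<lambda>_. 0)" using wdeg_zero[OF M_pos] by auto
    then show "tt M \<alpha> v (fst x) (snd x) = 0" using no_harm by (simp add: tt_def)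
  qed
  show "TT M d \<alpha> v d = 0" unfolding TT_def
  proof (intro sum.neutral ballI)
    fix x assume "x \<in> {x \<in> IS M d. wdeg M (snd x) = d}"
    then have "wdeg M (fst x) = 0" by (auto simp: IS_def)
    then have "fst x = (\<lambda>_. 0)" using wdeg_zero[OF M_pos] by auto
    then show "tt M \<alpha> v (fst x) (snd x) = 0" using no_harm by (simp add: tt_def)
  qed
qed

lemma SS_sym: "k \<le> d \<Longrightarrow> cnj (SS M d \<alpha> v k) = SS M d \<alpha> v (d - k)"
  by (simp add: SS_def)

lemma modelP_TT:
  assumes fin: "finite (IS M d)"
  shows "modelP M d \<alpha> v = (\<Sum>k\<le>d. TT M d \<alpha> v k)"
proof -
  have "modelP M d \<alpha> v = (\<Sum>x\<in>IS M d. (\<lambda>_. 1::complex) (wdeg M (snd x)) * tt M \<alpha> v (fst x) (snd x))"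
    by (simp add: modelP_def IS_def tt_def cvec_def case_prod_beta)
  also have "\<dots> = (\<Sum>k\<le>d. (\<lambda>_. 1::complex) k * (\<Sum>x\<in>{x\<in>IS M d. wdeg M (snd x) = k}. tt M \<alpha> v (fst x) (snd x)))"
    by (rule group_IS[OF fin])
  also have "\<dots> = (\<Sum>k\<le>d. TT M d \<alpha> v k)"
    by (simp add: TT_def)
  finally show ?thesis .
qed

lemma SS_sum:
  assumes fin: "finite (IS M d)"
  shows "(\<Sum>k\<le>d. SS M d \<alpha> v k) = modelP M d \<alpha> v + cnj (modelP M d \<alpha> v)"
proof -
  have "(\<Sum>k\<le>d. SS M d \<alpha> v k) = (\<Sum>k\<le>d. TT M d \<alpha> v k) + (\<Sum>k\<le>d. cnj (TT M d \<alpha> v (d - k)))"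
    unfolding SS_def by (rule sum.distrib)
  also have "(\<Sum>k\<le>d. cnj (TT M d \<alpha> v (d - k))) = (\<Sum>k\<le>d. cnj (TT M d \<alpha> v k))"
    by (rule sum_rev_atMost)
  finally show ?thesis unfolding modelP_TT[OF fin] cnj_sum by simp
qed



lemma poly_contra:
  fixes S p q :: "nat \<Rightarrow> complex"
  assumes van: "\<forall>\<omega>\<in>sphere 0 1. (\<Sum>k\<le>d. \<Sum>j\<le>d. (p k * p j - q k * q j) * (S k * cnj (S j)) * \<omega>^(2*(d-k)+2*j)) = 0"
    and kmin: "kmin \<le> d" "S kmin \<noteq> 0" "\<forall>k<kmin. S k = 0"
    and kmax: "kmax \<le> d" "S kmax \<noteq> 0" "\<forall>k. kmax < k \<and> k \<le> d \<longrightarrow> S k = 0"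
    and pq: "p kmin * p kmax \<noteq> q kmin * q kmax"
  shows False
proof -
  define Sq where "Sq = {..d} \<times> {..d}"
  define e where "e = (\<lambda>x::nat\<times>nat. 2*(d - fst x) + 2* snd x)"
  define w where "w = (\<lambda>x::nat\<times>nat. (p (fst x) * p (snd x) - q (fst x) * q (snd x)) * (S (fst x) * cnj (S (snd x))))"
  define coef where "coef = (\<lambda>i. \<Sum>x\<in>{x. x \<in> Sq \<and> e x = i}. w x)"
  have fSq: "finite Sq" by (simp add: Sq_def)
  have eq: "(\<Sum>k\<le>d. \<Sum>j\<le>d. (p k * p j - q k * q j) * (S k * cnj (S j)) * \<omega>^(2*(d-k)+2*j))
        = (\<Sum>i\<le>4*d. coef i * \<omega>^i)" for \<omega>
  proof -
    have "(\<Sum>k\<le>d. \<Sum>j\<le>d. (p k * p j - q k * q j) * (S k * cnj (S j)) * \<omega>^(2*(d-k)+2*j))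
        = (\<Sum>x\<in>Sq. w x * \<omega>^(e x))"
      unfolding Sq_def w_def e_def by (simp add: sum.cartesian_product case_prod_beta)
    also have "\<dots> = (\<Sum>i\<le>4*d. (\<Sum>x\<in>{x. x \<in> Sq \<and> e x = i}. w x * \<omega>^(e x)))"
      by (rule sum.group[symmetric]) (auto simp: fSq Sq_def e_def)
    also have "\<dots> = (\<Sum>i\<le>4*d. coef i * \<omega>^i)"
    proof (intro sum.cong refl)
      fix i
      have "(\<Sum>x\<in>{x. x \<in> Sq \<and> e x = i}. w x * \<omega>^(e x)) = (\<Sum>x\<in>{x. x \<in> Sq \<and> e x = i}. w x * \<omega>^i)"
        by (intro sum.cong) auto
      then show "(\<Sum>x\<in>{x. x \<in> Sq \<and> e x = i}. w x * \<omega>^(e x)) = coef i * \<omega>^i"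
        by (simp add: coef_def sum_distrib_right)
    qed
    finally show ?thesis .
  qed
  define m0 where "m0 = 2*(d - kmin) + 2*kmax"
  have m0le: "m0 \<le> 4*d" using kmin kmax by (simp add: m0_def)
  have "coef m0 = w (kmin, kmax)"
  proof -
    have "coef m0 = (if (kmin,kmax) \<in> {x. x \<in> Sq \<and> e x = m0} then w (kmin,kmax) else 0)"
      unfolding coef_def
    proof (rule sum_single)
      show "finite {x. x \<in> Sq \<and> e x = m0}" using fSq by simp
      fix x assume x: "x \<in> {x. x \<in> Sq \<and> e x = m0}" "x \<noteq> (kmin, kmax)"
      show "w x = 0"
      proof (rule ccontr)
        assume "w x \<noteq> 0"
        then have s1: "S (fst x) \<noteq> 0" and s2: "S (snd x) \<noteq> 0" by (auto simp: w_def)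
        have "fst x \<le> d" "snd x \<le> d" using x by (auto simp: Sq_def)
        then have "kmin \<le> fst x" "snd x \<le> kmax" using s1 s2 kmin(3) kmax(3) by (meson not_le)+
        moreover have "2*(d - fst x) + 2* snd x = 2*(d - kmin) + 2*kmax" using x by (simp add: e_def m0_def)
        moreover note \<open>fst x \<le> d\<close> kmin(1)
        ultimately have "fst x = kmin" "snd x = kmax" by linarith+
        then show False using x(2) by (cases x) auto
      qed
    qed
    moreover have "(kmin,kmax) \<in> {x. x \<in> Sq \<and> e x = m0}" using kmin kmax by (simp add: Sq_def e_def m0_def)
    ultimately show ?thesis by simp
  qed
  moreover have "w (kmin, kmax) \<noteq> 0" using pq kmin(2) kmax(2) by (simp add: w_def)
  ultimately have "coef m0 \<noteq> 0" by simp
  then have "finite {z. (\<Sum>i\<le>4*d. coef i * z^i) = 0}"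
    using polyfun_finite_roots[of coef "4*d"] m0le by blast
  moreover have "sphere 0 1 \<subseteq> {z. (\<Sum>i\<le>4*d. coef i * z^i) = 0}"
    using van eq by auto
  ultimately have "finite (sphere (0::complex) 1)" by (rule finite_subset[rotated])
  then show False using infinite_sphere_c by simp
qed



definition XG where
  "XG M d \<alpha> c v = (\<Sum>(J,K)\<in>IS M d. tt M \<alpha> v J K * c (wdeg M K) + cnj (tt M \<alpha> v J K) * c (d - wdeg M K))"

lemma unit_cnj: "norm (\<omega>::complex) = 1 \<Longrightarrow> \<omega>^n * cnj \<omega> ^ n = 1"
  by (metis complex_norm_square power_mult_distrib norm_power power_one of_real_1 power2_eq_1_iff
        complex_cnj_power)

lemma XG_rot:
  assumes fin: "finite (IS M d)" and w: "norm \<omega> = 1"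
  shows "\<omega>^d * XG M d \<alpha> c (rot M \<omega> v) = (\<Sum>k\<le>d. c k * SS M d \<alpha> v k * \<omega>^(2*(d-k)))"
proof -
  have t1: "\<omega>^d * tt M \<alpha> (rot M \<omega> v) J K = \<omega>^(2*(d - wdeg M K)) * tt M \<alpha> v J K"
    and t2: "\<omega>^d * cnj (tt M \<alpha> (rot M \<omega> v) J K) = \<omega>^(2 * wdeg M K) * cnj (tt M \<alpha> v J K)"
    if "(J,K) \<in> IS M d" for J K
  proof -
    have d: "d = wdeg M J + wdeg M K" using that by (simp add: IS_def)
    have dk: "d - wdeg M K = wdeg M J" using d by simp
    have u1: "\<omega>^(wdeg M K) * cnj \<omega>^(wdeg M K) = 1" by (rule unit_cnj[OF w])
    have u2: "\<omega>^(wdeg M J) * cnj \<omega>^(wdeg M J) = 1" by (rule unit_cnj[OF w])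
    have p1: "\<omega>^d = \<omega>^(wdeg M J) * \<omega>^(wdeg M K)" by (simp add: d power_add)
    have p2: "\<omega>^(2*wdeg M J) = \<omega>^(wdeg M J) * \<omega>^(wdeg M J)" by (simp add: mult_2 power_add)
    have p3: "\<omega>^(2*wdeg M K) = \<omega>^(wdeg M K) * \<omega>^(wdeg M K)" by (simp add: mult_2 power_add)
    show "\<omega>^d * tt M \<alpha> (rot M \<omega> v) J K = \<omega>^(2*(d - wdeg M K)) * tt M \<alpha> v J K"
    proof -
      have "\<omega>^d * tt M \<alpha> (rot M \<omega> v) J K
          = (\<omega>^(wdeg M J) * \<omega>^(wdeg M J)) * (\<omega>^(wdeg M K) * cnj \<omega>^(wdeg M K)) * tt M \<alpha> v J K"
        unfolding tt_rot p1 by (simp only: mult_ac)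
      then show ?thesis unfolding u1 dk p2 by simp
    qed
    show "\<omega>^d * cnj (tt M \<alpha> (rot M \<omega> v) J K) = \<omega>^(2 * wdeg M K) * cnj (tt M \<alpha> v J K)"
    proof -
      have "\<omega>^d * cnj (tt M \<alpha> (rot M \<omega> v) J K)
          = (\<omega>^(wdeg M K) * \<omega>^(wdeg M K)) * (\<omega>^(wdeg M J) * cnj \<omega>^(wdeg M J)) * cnj (tt M \<alpha> v J K)"
        unfolding tt_rot p1 complex_cnj_mult complex_cnj_power complex_cnj_cnj by (simp only: mult_ac)
      then show ?thesis unfolding u2 p3 by simp
    qed
  qed
  let ?t = "\<lambda>x. tt M \<alpha> v (fst x) (snd x)"
  have "\<omega>^d * XG M d \<alpha> c (rot M \<omega> v)
      = (\<Sum>x\<in>IS M d. (c (wdeg M (snd x)) * \<omega>^(2*(d - wdeg M (snd x)))) * ?t x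
          + (c (d - wdeg M (snd x)) * \<omega>^(2 * wdeg M (snd x))) * cnj (?t x))"
    unfolding XG_def sum_distrib_left case_prod_beta
  proof (intro sum.cong refl)
    fix x assume x: "x \<in> IS M d"
    have e1: "\<omega>^d * tt M \<alpha> (rot M \<omega> v) (fst x) (snd x) = \<omega>^(2*(d - wdeg M (snd x))) * ?t x"
      using t1[of "fst x" "snd x"] x by simp
    have e2: "\<omega>^d * cnj (tt M \<alpha> (rot M \<omega> v) (fst x) (snd x)) = \<omega>^(2 * wdeg M (snd x)) * cnj (?t x)"
      using t2[of "fst x" "snd x"] x by simp
    show "\<omega>^d * (tt M \<alpha> (rot M \<omega> v) (fst x) (snd x) * c (wdeg M (snd x)) + cnj (tt M \<alpha> (rot M \<omega> v) (fst x) (snd x)) * c (d - wdeg M (snd x)))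
      = (c (wdeg M (snd x)) * \<omega>^(2*(d - wdeg M (snd x)))) * ?t x + (c (d - wdeg M (snd x)) * \<omega>^(2 * wdeg M (snd x))) * cnj (?t x)"
    proof -
      have "\<omega>^d * (tt M \<alpha> (rot M \<omega> v) (fst x) (snd x) * c (wdeg M (snd x)) + cnj (tt M \<alpha> (rot M \<omega> v) (fst x) (snd x)) * c (d - wdeg M (snd x)))
        = (\<omega>^d * tt M \<alpha> (rot M \<omega> v) (fst x) (snd x)) * c (wdeg M (snd x)) + (\<omega>^d * cnj (tt M \<alpha> (rot M \<omega> v) (fst x) (snd x))) * c (d - wdeg M (snd x))"
        by (simp only: distrib_left mult.assoc)
      also have "\<dots> = (\<omega>^(2*(d - wdeg M (snd x))) * ?t x) * c (wdeg M (snd x)) + (\<omega>^(2 * wdeg M (snd x)) * cnj (?t x)) * c (d - wdeg M (snd x))"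
        by (simp only: e1 e2)
      finally show ?thesis by (simp only: mult_ac)
    qed
  qed
  also have "\<dots> = (\<Sum>x\<in>IS M d. c (wdeg M (snd x)) * \<omega>^(2*(d - wdeg M (snd x))) * ?t x)
          + (\<Sum>x\<in>IS M d. c (d - wdeg M (snd x)) * \<omega>^(2 * wdeg M (snd x)) * cnj (?t x))"
    by (rule sum.distrib)
  also have g1: "(\<Sum>x\<in>IS M d. c (wdeg M (snd x)) * \<omega>^(2*(d - wdeg M (snd x))) * ?t x)
       = (\<Sum>k\<le>d. c k * \<omega>^(2*(d - k)) * TT M d \<alpha> v k)"
    using group_IS[OF fin, of "\<lambda>k. c k * \<omega>^(2*(d-k))" ?t] by (simp add: TT_def)
  also have g2: "(\<Sum>x\<in>IS M d. c (d - wdeg M (snd x)) * \<omega>^(2 * wdeg M (snd x)) * cnj (?t x))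
       = (\<Sum>k\<le>d. c (d - k) * \<omega>^(2 * k) * cnj (TT M d \<alpha> v k))"
    using group_IS[OF fin, of "\<lambda>k. c (d - k) * \<omega>^(2*k)" "\<lambda>x. cnj (?t x)"] by (simp add: TT_def cnj_sum)
  also have "(\<Sum>k\<le>d. c (d - k) * \<omega>^(2 * k) * cnj (TT M d \<alpha> v k))
      = (\<Sum>k\<le>d. c k * \<omega>^(2 * (d - k)) * cnj (TT M d \<alpha> v (d - k)))"
  proof -
    have "(\<Sum>k\<le>d. c (d - k) * \<omega>^(2 * k) * cnj (TT M d \<alpha> v k))
        = (\<Sum>k\<le>d. (\<lambda>k. c (d - k) * \<omega>^(2 * k) * cnj (TT M d \<alpha> v k)) (d - k))"
      by (rule sum_rev_atMost[symmetric])
    also have "\<dots> = (\<Sum>k\<le>d. c k * \<omega>^(2 * (d - k)) * cnj (TT M d \<alpha> v (d - k)))"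
      by (intro sum.cong refl) auto
    finally show ?thesis .
  qed
  finally show ?thesis
    by (simp add: SS_def sum.distrib[symmetric] algebra_simps)
qed

lemma conj_poly:
  assumes w: "norm \<omega> = 1"
  shows "\<omega>^(2*d) * cnj (\<Sum>k\<le>d. c k * S k * \<omega>^(2*(d-k))) = (\<Sum>k\<le>d. cnj (c k) * cnj (S k) * \<omega>^(2*k))"
  unfolding cnj_sum sum_distrib_left
proof (intro sum.cong refl)
  fix k assume "k \<in> {..d}"
  then have e: "2*d = 2*k + 2*(d-k)" by simp
  have p: "\<omega>^(2*d) = \<omega>^(2*k) * \<omega>^(2*(d-k))" by (subst e) (rule power_add)
  have u: "\<omega>^(2*(d-k)) * cnj \<omega>^(2*(d-k)) = 1" by (rule unit_cnj[OF w])
  have "\<omega>^(2*d) * cnj (c k * S k * \<omega>^(2*(d-k)))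
     = cnj (c k) * cnj (S k) * \<omega>^(2*k) * (\<omega>^(2*(d-k)) * cnj \<omega>^(2*(d-k)))"
    unfolding p complex_cnj_mult complex_cnj_power by (simp only: mult_ac)
  then show "\<omega>^(2*d) * cnj (c k * S k * \<omega>^(2*(d-k))) = cnj (c k) * cnj (S k) * \<omega>^(2*k)"
    unfolding u by simp
qed



lemma binom_ineq:
  assumes k1: "1 \<le> k" and kn: "k \<le> n"
  shows "(n choose Suc k) * (n choose Suc (Suc n - k)) < (n choose k) * (n choose (Suc n - k))"
proof -
  define j where "j = Suc n - k"
  have jn: "j \<le> n" using k1 kn by (simp add: j_def)
  have a1: "Suc k * (n choose Suc k) = (n - k) * (n choose k)" by (rule absorb_nat)
  have a2: "Suc j * (n choose Suc j) = (n - j) * (n choose j)" by (rule absorb_nat)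
  have nj: "n - j = k - 1" using k1 kn by (simp add: j_def)
  have R: "(n choose k) * (n choose j) > 0" using kn jn by simp
  have key: "(Suc k * Suc j) * ((n choose Suc k) * (n choose Suc j)) = ((n - k) * (k - 1)) * ((n choose k) * (n choose j))"
  proof -
    have "(Suc k * Suc j) * ((n choose Suc k) * (n choose Suc j)) = (Suc k * (n choose Suc k)) * (Suc j * (n choose Suc j))"
      by (simp only: mult_ac)
    also have "\<dots> = ((n - k) * (n choose k)) * ((k - 1) * (n choose j))" unfolding a1 a2 nj ..
    finally show ?thesis by (simp only: mult_ac)
  qed
  have lt: "(n - k) * (k - 1) < Suc k * Suc j"
  proof -
    have "n - k \<le> Suc j" using kn by (simp add: j_def)
    moreover have "k - 1 < Suc k" by simp
    ultimately have "(n - k) * (k - 1) \<le> Suc j * (k - 1)" by (intro mult_le_mono1)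
    also have "\<dots> < Suc j * Suc k" by (rule mult_less_mono2) simp_all
    finally show ?thesis by (simp add: mult.commute)
  qed
  show ?thesis
  proof (rule ccontr)
    assume "\<not> ?thesis"
    then have ge: "(n choose k) * (n choose j) \<le> (n choose Suc k) * (n choose Suc j)" by (simp add: j_def)
    have "(Suc k * Suc j) * ((n choose k) * (n choose j)) \<le> (Suc k * Suc j) * ((n choose Suc k) * (n choose Suc j))"
      using ge by (rule mult_le_mono2)
    also have "\<dots> = ((n - k) * (k - 1)) * ((n choose k) * (n choose j))" by (rule key)
    also have "\<dots> < (Suc k * Suc j) * ((n choose k) * (n choose j))"
      using lt R by (rule mult_strict_right_mono)
    finally show False by simp
  qed
qed

lemma pp_qq_ne:
  assumes "1 \<le> k" "k \<le> n"
  shows "pp (Suc n) k * pp (Suc n) (Suc n - k) \<noteq> qq (Suc n) k * qq (Suc n) (Suc n - k)"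
proof -
  have pos: "k * (Suc n - k) > 0" using assms by simp
  have lt: "(n choose Suc k) * (n choose Suc (Suc n - k)) < (n choose k) * (n choose (Suc n - k))"
    by (rule binom_ineq[OF assms])
  have "(k * (Suc n - k)) * ((n choose Suc k) * (n choose Suc (Suc n - k)))
      < (k * (Suc n - k)) * ((n choose k) * (n choose (Suc n - k)))"
    using lt pos by simp
  then have ne: "k * (n choose Suc k) * ((Suc n - k) * (n choose Suc (Suc n - k)))
      \<noteq> k * (n choose k) * ((Suc n - k) * (n choose (Suc n - k)))"
    by (simp add: mult_ac)
  show ?thesis
    unfolding pp_def qq_def of_nat_mult[symmetric]
    using ne by (simp only: diff_Suc_1 Suc_eq_plus1 of_nat_eq_iff) simp
qed



lemma cnj_pp: "cnj (pp d k) = pp d k" and cnj_qq: "cnj (qq d k) = qq d k"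
  by (simp_all add: pp_def qq_def)

lemma double_sum_gen:
  fixes p q S a c :: "nat \<Rightarrow> complex"
  shows "(\<Sum>k\<le>d. \<Sum>j\<le>d. (p k * p j - q k * q j) * (S k * cnj (S j)) * (a k * c j))
    = (\<Sum>k\<le>d. p k * S k * a k) * (\<Sum>j\<le>d. p j * cnj (S j) * c j)
    - (\<Sum>k\<le>d. q k * S k * a k) * (\<Sum>j\<le>d. q j * cnj (S j) * c j)"
  unfolding sum_product sum_subtractf[symmetric]
  by (intro sum.cong refl) (simp add: algebra_simps)

lemma double_sum_eq:
  fixes p q S :: "nat \<Rightarrow> complex"
  shows "(\<Sum>k\<le>d. \<Sum>j\<le>d. (p k * p j - q k * q j) * (S k * cnj (S j)) * \<omega>^(2*(d-k)+2*j))
    = (\<Sum>k\<le>d. p k * S k * \<omega>^(2*(d-k))) * (\<Sum>j\<le>d. p j * cnj (S j) * \<omega>^(2*j))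
    - (\<Sum>k\<le>d. q k * S k * \<omega>^(2*(d-k))) * (\<Sum>j\<le>d. q j * cnj (S j) * \<omega>^(2*j))"
  unfolding power_add by (rule double_sum_gen)

lemma exists_omega:
  fixes M :: "'n::finite \<Rightarrow> nat"
  assumes M_pos: "\<forall>i. M i > 0"
    and no_harm: "\<forall>J K. (J = (\<lambda>_. 0) \<or> K = (\<lambda>_. 0)) \<longrightarrow> \<alpha> J K = 0"
    and P_real: "\<forall>z. Im (modelP M d \<alpha> z) = 0"
    and nz: "modelP M d \<alpha> v1 \<noteq> 0"
  shows "\<exists>\<omega>. norm \<omega> = 1 \<and> cmod (XG M d \<alpha> (pp d) (rot M \<omega> v1)) \<noteq> cmod (XG M d \<alpha> (qq d) (rot M \<omega> v1))"
proof (rule ccontr)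
  assume H0: "\<not> ?thesis"
  have H: "cmod (XG M d \<alpha> (pp d) (rot M \<omega> v1)) = cmod (XG M d \<alpha> (qq d) (rot M \<omega> v1))" if "norm \<omega> = 1" for \<omega>
    using H0 that by blast
  have fin: "finite (IS M d)" by (rule finite_IS[OF M_pos])
  define S where "S = SS M d \<alpha> v1"
  have "(\<Sum>k\<le>d. S k) = modelP M d \<alpha> v1 + cnj (modelP M d \<alpha> v1)"
    unfolding S_def by (rule SS_sum[OF fin])
  also have "\<dots> \<noteq> 0"
  proof -
    have "modelP M d \<alpha> v1 = complex_of_real (Re (modelP M d \<alpha> v1))"
      using P_real by (simp add: complex_eq_iff)
    then show ?thesis using nz by (metis complex_cnj_complex_of_real mult_2 mult_eq_0_iff
          of_real_add of_real_eq_0_iff zero_neq_numeral)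
  qed
  finally obtain k0 where k0: "k0 \<le> d" "S k0 \<noteq> 0" by (meson atMost_iff sum.neutral)
  define Z where "Z = {k. k \<le> d \<and> S k \<noteq> 0}"
  have fZ: "finite Z" by (simp add: Z_def)
  have neZ: "Z \<noteq> {}" using k0 by (auto simp: Z_def)
  define kmin where "kmin = Min Z"
  define kmax where "kmax = Max Z"
  have kminZ: "kmin \<in> Z" and kmaxZ: "kmax \<in> Z" using fZ neZ by (simp_all add: kmin_def kmax_def)
  have below: "\<forall>k<kmin. S k = 0"
  proof (intro allI impI)
    fix k assume k: "k < kmin"
    show "S k = 0"
    proof (rule ccontr)
      assume "S k \<noteq> 0"
      then have "k \<in> Z" using k kminZ by (auto simp: Z_def)
      then have "kmin \<le> k" using fZ by (simp add: kmin_def)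
      then show False using k by simp
    qed
  qed
  have above: "\<forall>k. kmax < k \<and> k \<le> d \<longrightarrow> S k = 0"
  proof (intro allI impI)
    fix k assume k: "kmax < k \<and> k \<le> d"
    show "S k = 0"
    proof (rule ccontr)
      assume "S k \<noteq> 0"
      then have "k \<in> Z" using k by (auto simp: Z_def)
      then have "k \<le> kmax" using fZ by (simp add: kmax_def)
      then show False using k by simp
    qed
  qed
  have symZ: "d - k \<in> Z" if "k \<in> Z" for k
  proof -
    have "S (d - k) = cnj (S k)" using that SS_sym[of k d M \<alpha> v1] by (simp add: Z_def S_def)
    then show ?thesis using that by (auto simp: Z_def)
  qed
  have kmax_eq: "kmax = d - kmin"
  proof -
    have "d - kmin \<le> kmax" using symZ[OF kminZ] fZ by (simp add: kmax_def)
    moreover have "kmin \<le> d - kmax" using symZ[OF kmaxZ] fZ by (simp add: kmin_def)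
    moreover have "kmax \<le> d" "kmin \<le> d" using kmaxZ kminZ by (auto simp: Z_def)
    ultimately show ?thesis by linarith
  qed
  have S0: "S 0 = 0" and Sd: "S d = 0"
    unfolding S_def SS_def using TT_0[OF M_pos no_harm, of d v1] by simp_all
  have kmin1: "1 \<le> kmin" using kminZ S0 by (cases kmin) (auto simp: Z_def)
  have kmind: "kmin < d" using kminZ Sd by (auto simp: Z_def le_less)
  obtain n where dn: "d = Suc n" using kmind by (cases d) auto
  have pq: "pp d kmin * pp d kmax \<noteq> qq d kmin * qq d kmax"
    unfolding kmax_eq dn by (rule pp_qq_ne) (use kmin1 kmind dn in auto)
  have van: "\<forall>\<omega>\<in>sphere 0 1. (\<Sum>k\<le>d. \<Sum>j\<le>d. (pp d k * pp d j - qq d k * qq d j) * (S k * cnj (S j)) * \<omega>^(2*(d-k)+2*j)) = 0"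
  proof
    fix \<omega> :: complex assume "\<omega> \<in> sphere 0 1"
    then have w: "norm \<omega> = 1" by simp
    define A where "A = (\<Sum>k\<le>d. pp d k * S k * \<omega>^(2*(d-k)))"
    define B where "B = (\<Sum>k\<le>d. qq d k * S k * \<omega>^(2*(d-k)))"
    have hA: "\<omega>^d * XG M d \<alpha> (pp d) (rot M \<omega> v1) = A"
      unfolding A_def S_def by (rule XG_rot[OF fin w])
    have hB: "\<omega>^d * XG M d \<alpha> (qq d) (rot M \<omega> v1) = B"
      unfolding B_def S_def by (rule XG_rot[OF fin w])
    have cA: "(\<Sum>j\<le>d. pp d j * cnj (S j) * \<omega>^(2*j)) = \<omega>^(2*d) * cnj A"
      unfolding A_def conj_poly[OF w] cnj_pp ..
    have cB: "(\<Sum>j\<le>d. qq d j * cnj (S j) * \<omega>^(2*j)) = \<omega>^(2*d) * cnj B"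
      unfolding B_def conj_poly[OF w] cnj_qq ..
    have nA: "cmod A = cmod (XG M d \<alpha> (pp d) (rot M \<omega> v1))"
      unfolding hA[symmetric] by (simp add: norm_mult norm_power w)
    have nB: "cmod B = cmod (XG M d \<alpha> (qq d) (rot M \<omega> v1))"
      unfolding hB[symmetric] by (simp add: norm_mult norm_power w)
    have "A * cnj A = B * cnj B"
      unfolding complex_norm_square[symmetric] nA nB H[OF w] ..
    then show "(\<Sum>k\<le>d. \<Sum>j\<le>d. (pp d k * pp d j - qq d k * qq d j) * (S k * cnj (S j)) * \<omega>^(2*(d-k)+2*j)) = 0"
      unfolding double_sum_eq cA cB A_def[symmetric] B_def[symmetric] by (simp add: algebra_simps)
  qed
  show False
    by (rule poly_contra[OF van, of kmin kmax]) (use kminZ kmaxZ below above pq in \<open>auto simp: Z_def\<close>)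
qed



lemma E_solve:
  fixes X Y x R :: complex
  assumes R0: "R \<noteq> 0" and cR: "cnj R = R" and RX: "X * cnj X - Y * cnj Y = R"
  shows "X * (inverse R * (cnj X * x - Y * cnj x)) + Y * cnj (inverse R * (cnj X * x - Y * cnj x)) = x"
proof -
  have ci: "cnj (inverse R) = inverse R" using cR by (metis complex_cnj_inverse)
  have "X * (inverse R * (cnj X * x - Y * cnj x)) + Y * cnj (inverse R * (cnj X * x - Y * cnj x))
      = inverse R * ((X * cnj X - Y * cnj Y) * x)"
    unfolding complex_cnj_mult complex_cnj_diff complex_cnj_cnj ci by (simp add: algebra_simps)
  also have "\<dots> = x" unfolding RX using R0 by simp
  finally show ?thesis .
qed

theorem mainTheorem8:
  fixes M :: "'n::finite \<Rightarrow> nat" and d :: nat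
    and \<alpha> :: "('n \<Rightarrow> nat) \<Rightarrow> ('n \<Rightarrow> nat) \<Rightarrow> complex"
    and g :: "complex^'n \<Rightarrow> complex poly"
  assumes M_pos: "\<forall>i. M i > 0"
    and P_real: "\<forall>z. Im (modelP M d \<alpha> z) = 0"
    and no_harm: "\<forall>J K. (J = (\<lambda>_. 0) \<or> K = (\<lambda>_. 0)) \<longrightarrow> \<alpha> J K = 0"
    and P_nonzero: "\<exists>z. modelP M d \<alpha> z \<noteq> 0"
    and g_one: "\<forall>v. poly (g v) 1 = 0"
    and g_bdry: "\<forall>v. \<forall>\<zeta>\<in>sphere 0 1. Re (poly (g v) \<zeta>) = Re (modelP M d \<alpha> (hdisc M v \<zeta>))"
  shows "\<exists>U :: ((complex^'n) \<times> complex) set. open U \<and> U \<noteq> {} \<and>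
           U \<subseteq> (\<Union>v. (\<lambda>\<zeta>. (hdisc M v \<zeta>, poly (g v) \<zeta>)) ` ball 0 1)"
proof -
  obtain v1 where v1: "modelP M d \<alpha> v1 \<noteq> 0" using P_nonzero by blast
  obtain \<omega> where w: "norm \<omega> = 1"
    and ne0: "cmod (XG M d \<alpha> (pp d) (rot M \<omega> v1)) \<noteq> cmod (XG M d \<alpha> (qq d) (rot M \<omega> v1))"
    using exists_omega[OF M_pos no_harm P_real v1] by blast
  define v0 where "v0 = rot M \<omega> v1"
  define X where "X = Xc M d \<alpha> v0"
  define Y where "Y = Yc M d \<alpha> v0"
  have ne: "cmod X \<noteq> cmod Y"
    using ne0 unfolding X_def Y_def Xc_closed[OF M_pos no_harm] Yc_closed[OF M_pos no_harm] XG_def v0_def .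
  obtain D where D: "(Phi M d \<alpha> has_derivative D) (at (v0, 0))" using Phi_deriv_ex by blast
  have blD: "bounded_linear D" using D by (rule has_derivative_bounded_linear)
  have linD: "linear D" using blD by (rule bounded_linear.linear)
  have F1': "fst (D (a, 0)) = a" for a by (rule F1[OF D])
  define wv where "wv = (\<lambda>e::complex. ((\<chi> i. of_nat (M i) * e * v0$i), e))"
  have F2': "D (wv e) = (0, X * e + Y * cnj e)" for e
    unfolding wv_def X_def Y_def by (rule F2[OF D])
  define R where "R = complex_of_real ((cmod X)^2 - (cmod Y)^2)"
  have r: "(cmod X)^2 - (cmod Y)^2 \<noteq> 0" using ne power2_eq_iff_nonneg[of "cmod X" "cmod Y"] by simp
  have R0: "R \<noteq> 0" unfolding R_def of_real_eq_0_iff by (rule r)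
  have cR: "cnj R = R" by (simp add: R_def)
  have RX: "X * cnj X - Y * cnj Y = R"
    by (simp only: R_def of_real_diff complex_norm_square)
  define E where "E = (\<lambda>x::complex. inverse R * (cnj X * x - Y * cnj x))"
  have ES: "X * E x + Y * cnj (E x) = x" for x
    unfolding E_def by (rule E_solve[OF R0 cR RX])
  define G where "G = (\<lambda>q::(complex^'n) \<times> complex. (fst q, 0::complex) + wv (E (snd q - snd (D (fst q, 0)))))"
  have DG: "D \<circ> G = id"
  proof
    fix q :: "(complex^'n) \<times> complex"
    have "D (G q) = D (fst q, 0) + D (wv (E (snd q - snd (D (fst q, 0)))))"
      unfolding G_def by (rule linear_add[OF linD])
    also have "\<dots> = q"
      unfolding F2' ES using F1'[of "fst q"] by (simp add: prod_eq_iff)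
    finally show "(D \<circ> G) q = id q" by simp
  qed
  have linG: "linear G"
  proof (rule linearI)
    have Eadd: "E (x + y) = E x + E y" for x y by (simp add: E_def algebra_simps)
    have Escale: "E (c *\<^sub>R x) = c *\<^sub>R E x" for c x by (simp add: E_def scaleR_conv_of_real algebra_simps)
    have wadd: "wv (x + y) = wv x + wv y" for x y by (simp add: wv_def vec_eq_iff algebra_simps)
    have sc: "\<And>(c::real) (a::complex). c *\<^sub>R a = of_real c * a" by (simp add: scaleR_conv_of_real)
    have wscale: "wv (c *\<^sub>R x) = c *\<^sub>R wv x" for c x
      unfolding wv_def by (simp add: vec_eq_iff sc mult_ac)
    have Dadd: "D (a + b, 0) = D (a, 0) + D (b, 0)" for a b
      using linear_add[OF linD, of "(a,0)" "(b,0)"] by simp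
    have Dscale: "D (c *\<^sub>R a, 0) = c *\<^sub>R D (a, 0)" for c a
      using linear_scale[OF linD, of c "(a,0)"] by simp
    define E' where "E' = (\<lambda>q::(complex^'n) \<times> complex. E (snd q - snd (D (fst q, 0))))"
    have Gq: "G q = (fst q, 0) + wv (E' q)" for q by (simp add: G_def E'_def)
    fix x y :: "(complex^'n) \<times> complex" and c :: real
    have "snd (x + y) - snd (D (fst (x + y), 0)) = (snd x - snd (D (fst x, 0))) + (snd y - snd (D (fst y, 0)))"
      by (simp add: Dadd)
    then have E'add: "E' (x + y) = E' x + E' y" unfolding E'_def by (simp only: Eadd)
    have "snd (c *\<^sub>R x) - snd (D (fst (c *\<^sub>R x), 0)) = c *\<^sub>R (snd x - snd (D (fst x, 0)))"
      by (simp add: Dscale scaleR_right_diff_distrib)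
    then have E'scale: "E' (c *\<^sub>R x) = c *\<^sub>R E' x" unfolding E'_def by (simp only: Escale)
    show "G (x + y) = G x + G y"
      unfolding Gq E'add wadd by (simp add: algebra_simps)
    show "G (c *\<^sub>R x) = c *\<^sub>R G x"
      unfolding Gq E'scale wscale by (simp add: scaleR_right_distrib)
  qed
  have blG: "bounded_linear G" using linG by (simp add: linear_conv_bounded_linear)
  have cont: "continuous_on UNIV (Phi M d \<alpha>)"
  proof (rule continuous_at_imp_continuous_on, rule ballI)
    fix p
    obtain Dp where "(Phi M d \<alpha> has_derivative Dp) (at p)" using Phi_deriv_ex by blast
    then show "isCont (Phi M d \<alpha>) p" by (rule has_derivative_continuous)
  qed
  define T where "T = (UNIV :: (complex^'n) set) \<times> ball (0::complex) 1"
  have oT: "open T" unfolding T_def by (intro open_Times) auto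
  have v0T: "(v0, 0) \<in> interior T" using oT by (simp add: interior_open T_def)
  have "Phi M d \<alpha> (v0, 0) \<in> interior (Phi M d \<alpha> ` T)"
    by (rule sussmann_open_mapping[OF open_UNIV cont _ D blG DG _ v0T]) auto
  then have neU: "interior (Phi M d \<alpha> ` T) \<noteq> {}" by (metis empty_iff)
  have sub: "Phi M d \<alpha> ` T \<subseteq> (\<Union>v. (\<lambda>\<zeta>. (hdisc M v \<zeta>, poly (g v) \<zeta>)) ` ball 0 1)"
  proof
    fix y assume "y \<in> Phi M d \<alpha> ` T"
    then obtain p where p1: "y = Phi M d \<alpha> p" and p2: "p \<in> T" by (rule imageE)
    define v where "v = fst p"
    define z where "z = snd p"
    have z: "z \<in> ball 0 1" using p2 by (simp add: T_def z_def mem_Times_iff)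
    have "poly (g v) z = gexp M d \<alpha> v z"
      by (rule g_eq[OF M_pos no_harm g_one g_bdry z])
    then have yeq: "y = (hdisc M v z, poly (g v) z)" using p1 by (simp add: Phi_def v_def z_def)
    have "y \<in> (\<lambda>\<zeta>. (hdisc M v \<zeta>, poly (g v) \<zeta>)) ` ball 0 1"
      by (rule image_eqI[of y _ z]) (use yeq z in simp_all)
    then show "y \<in> (\<Union>v. (\<lambda>\<zeta>. (hdisc M v \<zeta>, poly (g v) \<zeta>)) ` ball 0 1)"
      by (rule UN_I[OF UNIV_I])
  qed
  show ?thesis
  proof (intro exI conjI)
    show "open (interior (Phi M d \<alpha> ` T))" by (rule open_interior)
    show "interior (Phi M d \<alpha> ` T) \<noteq> {}" by (rule neU)
    show "interior (Phi M d \<alpha> ` T) \<subseteq> (\<Union>v. (\<lambda>\<zeta>. (hdisc M v \<zeta>, poly (g v) \<zeta>)) ` ball 0 1)"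
      by (rule subset_trans[OF interior_subset sub])
  qed
qed

end
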